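(* Let $\sigma$ be a primitive substitution on $\mathcal{A}$. Let $f\in C(X_\sigma,\mathbb{Z})$ and suppose there is $k\in\mathbb{N}$ such that $f$ is constant on each atom of $\mathcal{P}_k$. For $n\ge k$ define $\phi_n\in\mathbb{R}^{\mathcal{L}_2(X_\sigma)}$ by $$\phi_n(ab)=\sum_{j=0}^{|\sigma^n(a)|-1} f|_{T^j\sigma^n([ab])}\quad(ab\in\mathcal{L}_2(X_\sigma)),$$ where $f|_A$ denotes the constant value of $f$ on the atom $A$. Let $d=|\mathcal{L}_2(X_\sigma)|$. If $f$ is a coboundary, then $\phi_n\in\beta(R_1(X_\sigma))$ for all $n\ge k+d$.
   Context: $\sigma$ is a primitive substitution (non-erasing morphism of $\mathcal{A}^*$ with some power of $M_\sigma$, $M_\sigma(a,b)=|\sigma(b)|_a$, positive); $X_\sigma$ is the set of $x\in\mathcal{A}^{\mathbb Z}$ all of whose finite factors are factors of some $\sigma^n(a)$; $T$ is the shift; $\mathcal{L}_n(X_\sigma)$ is the set of length-$n$ factors. For bi-infinite $y$, $\sigma(y)$ is the concatenation of the $\sigma(y_i)$ with $\sigma(y_0)$ starting at index $0$; $[w]=\{x\in X_\sigma: x_0\cdots x_{|w|-1}=w\}$ and $\sigma^n([ab])=\{\sigma^n(y):y\in[ab]\}$. For $n\in\mathbb N$, $\mathcal{P}_n=\{T^j\sigma^n([ab]): ab\in\mathcal{L}_2(X_\sigma),\ 0\le j<|\sigma^n(a)|\}$; this is a partition of $X_\sigma$ into clopen sets (atoms). $f\in C(X_\sigma,\mathbb{R})$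 is a coboundary if $f=g\circ T-g$ for some $g\in C(X_\sigma,\mathbb{R})$. $R_1(X_\sigma)$ is the set of maps $\mathcal{A}\to\mathbb{R}$ (maps on $\mathcal{L}_1(X_\sigma)$), and $\beta:R_1(X_\sigma)\to\mathbb{R}^{\mathcal{L}_2(X_\sigma)}$ is $(\beta f)(ab)=f(b)-f(a)$. *)

theory Defs
  imports "HOL-Analysis.Analysis" "HOL-Library.Sublist"
begin

definition nonerasing :: "('a \<Rightarrow> 'a list) \<Rightarrow> bool" where
  "nonerasing \<sigma> \<longleftrightarrow> (\<forall>a. \<sigma> a \<noteq> [])"

definition substw :: "('a \<Rightarrow> 'a list) \<Rightarrow> 'a list \<Rightarrow> 'a list" where
  "substw \<sigma> w = concat (map \<sigma> w)"

definition substpow :: "('a \<Rightarrow> 'a list) \<Rightarrow> nat \<Rightarrow> 'a \<Rightarrow> 'a list" where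
  "substpow \<sigma> n a = (substw \<sigma> ^^ n) [a]"

definition substmat :: "('a \<Rightarrow> 'a list) \<Rightarrow> 'a \<Rightarrow> 'a \<Rightarrow> nat" where
  "substmat \<sigma> a b = count_list (\<sigma> b) a"

fun matpow :: "('a::finite \<Rightarrow> 'a \<Rightarrow> nat) \<Rightarrow> nat \<Rightarrow> 'a \<Rightarrow> 'a \<Rightarrow> nat" where
  "matpow M 0 = (\<lambda>a b. if a = b then 1 else 0)"
| "matpow M (Suc n) = (\<lambda>a b. \<Sum>c\<in>UNIV. M a c * matpow M n c b)"

definition primitive :: "('a::finite \<Rightarrow> 'a list) \<Rightarrow> bool" where
  "primitive \<sigma> \<longleftrightarrow> nonerasing \<sigma> \<and> (\<exists>p>0. \<forall>a b. matpow (substmat \<sigma>) p a b > 0)"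

definition factor_at :: "(int \<Rightarrow> 'a) \<Rightarrow> int \<Rightarrow> nat \<Rightarrow> 'a list" where
  "factor_at x i m = map (\<lambda>j. x (i + int j)) [0..<m]"

definition Xsub :: "('a \<Rightarrow> 'a list) \<Rightarrow> (int \<Rightarrow> 'a) set" where
  "Xsub \<sigma> = {x. \<forall>i m. \<exists>n a. sublist (factor_at x i m) (substpow \<sigma> n a)}"

definition shift :: "(int \<Rightarrow> 'a) \<Rightarrow> (int \<Rightarrow> 'a)" where
  "shift x = (\<lambda>i. x (i + 1))"

text \<open>Two-letter language, as pairs (a,b) for the word ab.\<close>
definition L2 :: "('a \<Rightarrow> 'a list) \<Rightarrow> ('a \<times> 'a) set" where
  "L2 \<sigma> = {(a, b). \<exists>x\<in>Xsub \<sigma>. \<exists>i. x i = a \<and> x (i + 1) = b}"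

definition cyl2 :: "('a \<Rightarrow> 'a list) \<Rightarrow> 'a \<Rightarrow> 'a \<Rightarrow> (int \<Rightarrow> 'a) set" where
  "cyl2 \<sigma> a b = {x\<in>Xsub \<sigma>. x 0 = a \<and> x 1 = b}"

text \<open>Application of a non-erasing morphism \<tau> to a bi-infinite sequence y:
  the concatenation of the \<tau>(y_i), with \<tau>(y_0) starting at index 0.
  pos \<tau> y i is the starting index of the block \<tau>(y_i).\<close>
definition pos :: "('a \<Rightarrow> 'b list) \<Rightarrow> (int \<Rightarrow> 'a) \<Rightarrow> int \<Rightarrow> int" where
  "pos \<tau> y i = (if 0 \<le> i then (\<Sum>j\<in>{0..<i}. int (length (\<tau> (y j))))
                else - (\<Sum>j\<in>{i..<0}. int (length (\<tau> (y j)))))"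

definition bisubst :: "('a \<Rightarrow> 'b list) \<Rightarrow> (int \<Rightarrow> 'a) \<Rightarrow> (int \<Rightarrow> 'b)" where
  "bisubst \<tau> y = (\<lambda>m. let i = (THE i. pos \<tau> y i \<le> m \<and> m < pos \<tau> y (i + 1))
                     in \<tau> (y i) ! nat (m - pos \<tau> y i))"

definition atom :: "('a \<Rightarrow> 'a list) \<Rightarrow> nat \<Rightarrow> 'a \<Rightarrow> 'a \<Rightarrow> nat \<Rightarrow> (int \<Rightarrow> 'a) set" where
  "atom \<sigma> n a b j = (shift ^^ j) ` (bisubst (substpow \<sigma> n) ` cyl2 \<sigma> a b)"

definition constval :: "('x \<Rightarrow> 'c) \<Rightarrow> 'x set \<Rightarrow> 'c" where
  "constval f A = f (SOME x. x \<in> A)"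

definition Xtop :: "('a \<Rightarrow> 'a list) \<Rightarrow> (int \<Rightarrow> 'a) topology" where
  "Xtop \<sigma> = subtopology (product_topology (\<lambda>_. discrete_topology UNIV) UNIV) (Xsub \<sigma>)"

definition coboundary :: "('a \<Rightarrow> 'a list) \<Rightarrow> ((int \<Rightarrow> 'a) \<Rightarrow> real) \<Rightarrow> bool" where
  "coboundary \<sigma> f \<longleftrightarrow> (\<exists>g. continuous_map (Xtop \<sigma>) euclidean g \<and>
      (\<forall>x\<in>Xsub \<sigma>. f x = g (shift x) - g x))"

definition phi :: "('a \<Rightarrow> 'a list) \<Rightarrow> ((int \<Rightarrow> 'a) \<Rightarrow> int) \<Rightarrow> nat \<Rightarrow> 'a \<times> 'a \<Rightarrow> real" where
  "phi \<sigma> f n ab = real_of_int (\<Sum>j<length (substpow \<sigma> n (fst ab)).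
                    constval f (atom \<sigma> n (fst ab) (snd ab) j))"

text \<open>beta : R_1 \<rightarrow> R^{L_2}, (beta h)(ab) = h(b) - h(a).\<close>
definition in_beta_image :: "('a \<Rightarrow> 'a list) \<Rightarrow> ('a \<times> 'a \<Rightarrow> real) \<Rightarrow> bool" where
  "in_beta_image \<sigma> \<phi> \<longleftrightarrow> (\<exists>h :: 'a \<Rightarrow> real. \<forall>(a, b)\<in>L2 \<sigma>. \<phi> (a, b) = h b - h a)"

end

theory Submission
  imports Defs
begin


section \<open>Words\<close>

lemma substw_append[simp]: "substw \<sigma> (xs @ ys) = substw \<sigma> xs @ substw \<sigma> ys"
  by (simp add: substw_def)
lemma substw_Nil[simp]: "substw \<sigma> [] = []" by (simp add: substw_def)
lemma substw_Cons[simp]: "substw \<sigma> (x # xs) = \<sigma> x @ substw \<sigma> xs" by (simp add: substw_def)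

lemma funpow_substw_append:
  "(substw \<sigma> ^^ n) (xs @ ys) = (substw \<sigma> ^^ n) xs @ (substw \<sigma> ^^ n) ys"
  by (induction n) auto

lemma funpow_substw_Nil: "(substw \<sigma> ^^ n) [] = []"
  by (induction n) auto

lemma funpow_substw_concat: "(substw \<sigma> ^^ n) w = concat (map (substpow \<sigma> n) w)"
proof (induction w)
  case Nil then show ?case by (simp add: funpow_substw_Nil)
next
  case (Cons x w)
  have "(substw \<sigma> ^^ n) (x # w) = (substw \<sigma> ^^ n) [x] @ (substw \<sigma> ^^ n) w"
    using funpow_substw_append[where \<sigma>=\<sigma> and n=n and xs="[x]" and ys=w] by simp
  then show ?case using Cons by (simp add: substpow_def)
qed

lemma substpow_0[simp]: "substpow \<sigma> 0 a = [a]" by (simp add: substpow_def)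

lemma substpow_add: "substpow \<sigma> (m + k) a = concat (map (substpow \<sigma> k) (substpow \<sigma> m a))"
proof -
  have "substw \<sigma> ^^ (m + k) = substw \<sigma> ^^ k \<circ> substw \<sigma> ^^ m"
    by (metis add.commute funpow_add)
  then have "substpow \<sigma> (m + k) a = (substw \<sigma> ^^ k) ((substw \<sigma> ^^ m) [a])"
    by (simp add: substpow_def)
  moreover have "(substw \<sigma> ^^ k) ((substw \<sigma> ^^ m) [a]) = concat (map (substpow \<sigma> k) ((substw \<sigma> ^^ m) [a]))"
    by (rule funpow_substw_concat)
  moreover have "(substw \<sigma> ^^ m) [a] = substpow \<sigma> m a" by (simp only: substpow_def)
  ultimately show ?thesis by simp
qed

lemma substpow_1[simp]: "substpow \<sigma> (Suc 0) a = \<sigma> a"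
  by (simp add: substpow_def substw_def)

lemma substpow_Suc: "substpow \<sigma> (Suc n) a = concat (map (substpow \<sigma> n) (\<sigma> a))"
  using substpow_add[of \<sigma> 1 n a] by simp

lemma substpow_Suc2: "substpow \<sigma> (Suc n) a = concat (map \<sigma> (substpow \<sigma> n a))"
proof -
  have "substpow \<sigma> (Suc 0) = \<sigma>" by (rule ext) simp
  then show ?thesis using substpow_add[of \<sigma> n 1 a] by simp
qed

lemma concat_map_nonempty: "(\<forall>a. f a \<noteq> []) \<Longrightarrow> w \<noteq> [] \<Longrightarrow> concat (map f w) \<noteq> []"
  by (cases w) auto

lemma substpow_ne: "\<forall>a. \<sigma> a \<noteq> [] \<Longrightarrow> \<forall>a. substpow \<sigma> n a \<noteq> []"
proof (induction n)
  case 0 then show ?case by simp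
next
  case (Suc n) then show ?case by (simp add: substpow_Suc concat_map_nonempty)
qed

lemma length_concat_map_ge: "(\<forall>a. f a \<noteq> []) \<Longrightarrow> length w \<le> length (concat (map f w))"
proof (induction w)
  case Nil then show ?case by simp
next
  case (Cons x w)
  have "f x \<noteq> []" using Cons.prems by blast
  then have "length (f x) \<ge> 1" by (cases "f x") auto
  then show ?case using Cons by simp
qed


section \<open>Factors\<close>

lemma factor_at_Suc: "factor_at x p (Suc m) = factor_at x p m @ [x (p + int m)]"
  by (simp add: factor_at_def)

lemma factor_at_0[simp]: "factor_at x p 0 = []"
  by (simp add: factor_at_def)

lemma factor_at_add: "factor_at x p (a + b) = factor_at x p a @ factor_at x (p + int a) b"
proof (induction b)
  case 0 then show ?case by simp
next
  case (Suc b)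
  have "factor_at x p (a + Suc b) = factor_at x p (a + b) @ [x (p + int (a + b))]"
    using factor_at_Suc[of x p "a + b"] by simp
  also have "\<dots> = factor_at x p a @ factor_at x (p + int a) b @ [x (p + int a + int b)]"
    using Suc by (simp add: add.assoc)
  also have "\<dots> = factor_at x p a @ factor_at x (p + int a) (Suc b)"
    using factor_at_Suc[of x "p + int a" b] by simp
  finally show ?case .
qed

lemma factor_at_length[simp]: "length (factor_at x p m) = m"
  by (simp add: factor_at_def)

lemma factor_at_nth[simp]: "j < m \<Longrightarrow> factor_at x p m ! j = x (p + int j)"
  by (simp add: factor_at_def)


lemma factor_at_trans: "factor_at (\<lambda>t. x (t + s)) p m = factor_at x (p + s) m"
  by (simp add: factor_at_def algebra_simps)

lemma factor_at_sublist:
  assumes "q \<le> p" "p + int m \<le> q + int M"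
  shows "sublist (factor_at x p m) (factor_at x q M)"
proof -
  define a where "a = nat (p - q)"
  define b where "b = M - a - m"
  have M: "M = a + (m + b)" using assms unfolding a_def b_def by linarith
  have "factor_at x q M = factor_at x q a @ factor_at x p m @ factor_at x (p + int m) b"
    using assms unfolding M factor_at_add a_def by (simp add: algebra_simps)
  then show ?thesis by (metis sublist_appendI)
qed

lemma sublist_concat_map: "sublist xs ys \<Longrightarrow> sublist (concat (map f xs)) (concat (map f ys))"
proof -
  assume "sublist xs ys"
  then obtain ps ss where "ys = ps @ xs @ ss" by (auto simp: sublist_def)
  then have "concat (map f ys) = concat (map f ps) @ concat (map f xs) @ concat (map f ss)" by simp
  then show ?thesis by (metis sublist_appendI)
qed


section \<open>Positions\<close>

lemma pos_0[simp]: "pos \<tau> y 0 = 0" by (simp add: pos_def)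

lemma pos_step: "pos \<tau> y (i + 1) = pos \<tau> y i + int (length (\<tau> (y i)))"
proof -
  consider "i \<ge> 0" | "i = -1" | "i < -1" by linarith
  then show ?thesis
  proof cases
    case 1
    have "{0..<i+1} = insert i {0..<i}" using 1 by auto
    then show ?thesis using 1 by (simp add: pos_def)
  next
    case 2
    have "{-1..<0::int} = {-1}" by auto
    then show ?thesis using 2 by (simp add: pos_def)
  next
    case 3
    have "{i..<0} = insert i {i+1..<0}" using 3 by auto
    then show ?thesis using 3 by (simp add: pos_def)
  qed
qed

lemma pos_unique:
  assumes "P 0 = 0" "\<And>i. P (i + 1) = P i + int (length (\<tau> (y i)))"
  shows "P i = pos \<tau> y i"
proof (induction i rule: int_induct[where k=0])
  case base then show ?case using assms by simp
next
  case (step1 i) then show ?case using assms(2) pos_step by metis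
next
  case (step2 i)
  have "P i = P (i - 1) + int (length (\<tau> (y (i - 1))))" using assms(2)[of "i-1"] by simp
  moreover have "pos \<tau> y i = pos \<tau> y (i - 1) + int (length (\<tau> (y (i - 1))))"
    using pos_step[of \<tau> y "i-1"] by simp
  ultimately show ?case using step2 by simp
qed

context
  fixes \<tau> :: "'a \<Rightarrow> 'b list"
  assumes ne: "\<forall>a. \<tau> a \<noteq> []"
begin

lemma pos_step_ge: "pos \<tau> y (i + 1) \<ge> pos \<tau> y i + 1"
proof -
  have "\<tau> (y i) \<noteq> []" using ne by blast
  then have "length (\<tau> (y i)) \<ge> 1" by (cases "\<tau> (y i)") auto
  then show ?thesis using pos_step[of \<tau> y i] by simp
qed

lemma pos_mono_nat: "pos \<tau> y i + int n \<le> pos \<tau> y (i + int n)"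
proof (induction n)
  case 0 then show ?case by simp
next
  case (Suc n)
  have h: "pos \<tau> y (i + int n + 1) \<ge> pos \<tau> y (i + int n) + 1" by (rule pos_step_ge)
  have e: "i + int (Suc n) = i + int n + 1" by simp
  have e2: "int (Suc n) = int n + 1" by simp
  show ?case unfolding e using h Suc e2 by linarith
qed

lemma pos_strict: "i < j \<Longrightarrow> pos \<tau> y i < pos \<tau> y j"
  using pos_mono_nat[of y i "nat (j - i)"] by simp

lemma pos_le: "i \<le> j \<Longrightarrow> pos \<tau> y i \<le> pos \<tau> y j"
  by (metis le_less pos_strict)

lemma pos_ge_self: "0 \<le> i \<Longrightarrow> i \<le> pos \<tau> y i"
  using pos_mono_nat[of y 0 "nat i"] by simp

lemma pos_le_self: "i \<le> 0 \<Longrightarrow> pos \<tau> y i \<le> i"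
  using pos_mono_nat[of y i "nat (- i)"] by simp

lemma pos_ex_aux: "pos \<tau> y a \<le> m \<Longrightarrow> m < pos \<tau> y (a + int n) \<Longrightarrow>
    \<exists>i. pos \<tau> y i \<le> m \<and> m < pos \<tau> y (i + 1)"
proof (induction n)
  case 0 then show ?case by simp
next
  case (Suc n)
  show ?case
  proof (cases "m < pos \<tau> y (a + int n)")
    case True then show ?thesis using Suc by blast
  next
    case False
    have e: "a + int (Suc n) = a + int n + 1" by simp
    show ?thesis using False Suc.prems unfolding e by (intro exI[of _ "a + int n"]) simp
  qed
qed

lemma pos_ex: "\<exists>i. pos \<tau> y i \<le> m \<and> m < pos \<tau> y (i + 1)"
proof -
  have "pos \<tau> y (- \<bar>m\<bar>) \<le> m" using pos_le_self[of "- \<bar>m\<bar>" y] by linarith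
  moreover have "m < pos \<tau> y (- \<bar>m\<bar> + int (nat (2 * \<bar>m\<bar> + 1)))"
    using pos_ge_self[of "\<bar>m\<bar> + 1" y] by simp
  ultimately show ?thesis using pos_ex_aux by blast
qed

lemma pos_uniq: "pos \<tau> y i \<le> m \<Longrightarrow> m < pos \<tau> y (i + 1) \<Longrightarrow>
   pos \<tau> y i' \<le> m \<Longrightarrow> m < pos \<tau> y (i' + 1) \<Longrightarrow> i = i'"
proof (rule ccontr)
  assume a: "pos \<tau> y i \<le> m" "m < pos \<tau> y (i + 1)" "pos \<tau> y i' \<le> m" "m < pos \<tau> y (i' + 1)" "i \<noteq> i'"
  then consider "i + 1 \<le> i'" | "i' + 1 \<le> i" by linarith
  then show False
  proof cases
    case 1 then show False using pos_le[OF 1, of y] a by linarith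
  next
    case 2 then show False using pos_le[OF 2, of y] a by linarith
  qed
qed

lemma bisubst_at:
  assumes "j < length (\<tau> (y i))"
  shows "bisubst \<tau> y (pos \<tau> y i + int j) = \<tau> (y i) ! j"
proof -
  have P: "pos \<tau> y i \<le> pos \<tau> y i + int j \<and> pos \<tau> y i + int j < pos \<tau> y (i + 1)"
    using assms pos_step[of \<tau> y i] by simp
  have "(THE i'. pos \<tau> y i' \<le> pos \<tau> y i + int j \<and> pos \<tau> y i + int j < pos \<tau> y (i' + 1)) = i"
    using P pos_uniq by blast
  then show ?thesis by (simp add: bisubst_def)
qed

lemma bisubst_eqI:
  assumes "\<And>i j. j < length (\<tau> (y i)) \<Longrightarrow> w (pos \<tau> y i + int j) = \<tau> (y i) ! j"
  shows "w = bisubst \<tau> y"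
proof
  fix m
  obtain i where i: "pos \<tau> y i \<le> m" "m < pos \<tau> y (i + 1)" using pos_ex by blast
  define j where "j = nat (m - pos \<tau> y i)"
  have m: "m = pos \<tau> y i + int j" using i j_def by simp
  have "j < length (\<tau> (y i))" using i pos_step[of \<tau> y i] j_def by simp
  then show "w m = bisubst \<tau> y m" using assms bisubst_at m by simp
qed

lemma pos_trans: "pos \<tau> (\<lambda>t. y (t + s)) i = pos \<tau> y (i + s) - pos \<tau> y s"
proof (rule sym, rule pos_unique)
  fix i
  show "pos \<tau> y (i + 1 + s) - pos \<tau> y s = pos \<tau> y (i + s) - pos \<tau> y s + int (length (\<tau> (y (i + s))))"
    using pos_step[of \<tau> y "i+s"] by (simp add: ac_simps)
qed simp

lemma bisubst_trans: "bisubst \<tau> (\<lambda>t. y (t + s)) = (\<lambda>t. bisubst \<tau> y (t + pos \<tau> y s))"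
proof (rule sym, rule bisubst_eqI)
  fix i j assume "j < length (\<tau> (y (i + s)))"
  then show "bisubst \<tau> y (pos \<tau> (\<lambda>t. y (t + s)) i + int j + pos \<tau> y s) = \<tau> (y (i + s)) ! j"
    using bisubst_at[of j y "i + s"] by (simp add: pos_trans)
qed

lemma factor_block: "factor_at (bisubst \<tau> y) (pos \<tau> y i) (length (\<tau> (y i))) = \<tau> (y i)"
  by (rule nth_equalityI) (simp_all add: bisubst_at)

lemma pos_add: "pos \<tau> u (p + int L) = pos \<tau> u p + int (length (concat (map \<tau> (factor_at u p L))))"
proof (induction L)
  case 0 then show ?case by (simp add: factor_at_def)
next
  case (Suc L)
  have "p + int (Suc L) = p + int L + 1" by simp
  then have "pos \<tau> u (p + int (Suc L)) = pos \<tau> u (p + int L + 1)" by (simp add: ac_simps)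
  also have "\<dots> = pos \<tau> u (p + int L) + int (length (\<tau> (u (p + int L))))" by (rule pos_step)
  finally show ?case using Suc by (simp add: factor_at_Suc)
qed

lemma bisubst_block:
  "factor_at (bisubst \<tau> u) (pos \<tau> u p) (length (concat (map \<tau> (factor_at u p L))))
     = concat (map \<tau> (factor_at u p L))"
proof (induction L)
  case 0 then show ?case by (simp add: factor_at_def)
next
  case (Suc L)
  define A where "A = concat (map \<tau> (factor_at u p L))"
  define B where "B = \<tau> (u (p + int L))"
  have e: "pos \<tau> u p + int (length A) = pos \<tau> u (p + int L)"
    using pos_add unfolding A_def by simp
  have c: "concat (map \<tau> (factor_at u p (Suc L))) = A @ B"
    unfolding A_def B_def by (simp add: factor_at_Suc)
  have "factor_at (bisubst \<tau> u) (pos \<tau> u p) (length (A @ B)) =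
     factor_at (bisubst \<tau> u) (pos \<tau> u p) (length A) @ factor_at (bisubst \<tau> u) (pos \<tau> u p + int (length A)) (length B)"
    using factor_at_add by (metis length_append)
  also have "\<dots> = A @ B"
  proof -
    have "factor_at (bisubst \<tau> u) (pos \<tau> u p) (length A) = A" using Suc unfolding A_def .
    moreover have "factor_at (bisubst \<tau> u) (pos \<tau> u p + int (length A)) (length B) = B"
      unfolding e B_def by (rule factor_block)
    ultimately show ?thesis by simp
  qed
  finally show ?case unfolding c .
qed

lemma bisubst_nth_block:
  assumes "j < length (concat (map \<tau> (factor_at u p L)))"
  shows "bisubst \<tau> u (pos \<tau> u p + int j) = concat (map \<tau> (factor_at u p L)) ! j"
  using arg_cong[OF bisubst_block[of u p L], of "\<lambda>w. w ! j"] assms by simp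

end

lemma shift_pow: "(shift ^^ n) x = (\<lambda>t. x (t + int n))"
  by (induction n) (auto simp: shift_def algebra_simps)


lemma Xsub_trans: "x \<in> Xsub \<sigma> \<Longrightarrow> (\<lambda>t. x (t + s)) \<in> Xsub \<sigma>"
  unfolding Xsub_def by (simp add: factor_at_trans)

lemma shift_eq: "shift x = (\<lambda>t. x (t + 1))" by (simp add: shift_def)

lemma shift_pow_X: "x \<in> Xsub \<sigma> \<Longrightarrow> (shift ^^ n) x \<in> Xsub \<sigma>"
  by (simp add: shift_pow Xsub_trans)

lemma shift_X: "x \<in> Xsub \<sigma> \<Longrightarrow> shift x \<in> Xsub \<sigma>"
  by (simp add: shift_eq Xsub_trans)

lemma take_factor:
  assumes "\<forall>l<length W. u (int l) = W ! l" "l \<le> length W"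
  shows "factor_at u 0 l = take l W"
  using assms by (intro nth_equalityI) auto

context
  fixes \<sigma> :: "'a \<Rightarrow> 'a list"
  assumes ne: "\<forall>a. \<sigma> a \<noteq> []"
begin

lemma nep: "\<forall>a. substpow \<sigma> n a \<noteq> []" using substpow_ne[OF ne] .

lemma bs_X:
  assumes y: "y \<in> Xsub \<sigma>"
  shows "bisubst (substpow \<sigma> n) y \<in> Xsub \<sigma>"
  unfolding Xsub_def
proof (intro CollectI allI)
  fix p :: int and m :: nat
  let ?\<tau> = "substpow \<sigma> n"
  let ?u = "bisubst ?\<tau> y"
  define q where "q = - \<bar>p\<bar>"
  define L where "L = nat (2 * \<bar>p\<bar> + int m)"
  have qL: "q + int L = \<bar>p\<bar> + int m" unfolding q_def L_def by simp
  define W where "W = concat (map ?\<tau> (factor_at y q L))"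
  have blk: "factor_at ?u (pos ?\<tau> y q) (length W) = W"
    unfolding W_def by (rule bisubst_block[OF nep])
  have pa: "pos ?\<tau> y (q + int L) = pos ?\<tau> y q + int (length W)"
    unfolding W_def by (rule pos_add[OF nep])
  have h1: "pos ?\<tau> y q \<le> q" unfolding q_def by (rule pos_le_self[OF nep]) simp
  have h2: "q + int L \<le> pos ?\<tau> y (q + int L)" by (rule pos_ge_self[OF nep]) (simp add: qL)
  have "sublist (factor_at ?u p m) (factor_at ?u (pos ?\<tau> y q) (length W))"
  proof (rule factor_at_sublist)
    show "pos ?\<tau> y q \<le> p" using h1 unfolding q_def by linarith
    show "p + int m \<le> pos ?\<tau> y q + int (length W)" using h2 pa qL by linarith
  qed
  then have s1: "sublist (factor_at ?u p m) W" using blk by simp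
  obtain N c where "sublist (factor_at y q L) (substpow \<sigma> N c)"
    using y unfolding Xsub_def by blast
  then have "sublist W (concat (map ?\<tau> (substpow \<sigma> N c)))"
    unfolding W_def by (rule sublist_concat_map)
  then have "sublist W (substpow \<sigma> (N + n) c)" by (simp add: substpow_add)
  then show "\<exists>N a. sublist (factor_at ?u p m) (substpow \<sigma> N a)"
    using s1 by (meson sublist_order.order.trans)
qed

lemma pos_comp:
  "pos (substpow \<sigma> k) (bisubst (substpow \<sigma> m) y) (pos (substpow \<sigma> m) y i) = pos (substpow \<sigma> (m + k)) y i"
proof (rule pos_unique[where P="\<lambda>i. pos (substpow \<sigma> k) (bisubst (substpow \<sigma> m) y) (pos (substpow \<sigma> m) y i)"])
  show "pos (substpow \<sigma> k) (bisubst (substpow \<sigma> m) y) (pos (substpow \<sigma> m) y 0) = 0" by simp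
next
  fix i
  let ?u = "bisubst (substpow \<sigma> m) y"
  let ?P = "pos (substpow \<sigma> m) y i"
  let ?L = "length (substpow \<sigma> m (y i))"
  have e1: "pos (substpow \<sigma> m) y (i + 1) = ?P + int ?L" by (rule pos_step)
  have e2: "pos (substpow \<sigma> k) ?u (?P + int ?L) = pos (substpow \<sigma> k) ?u ?P + int (length (concat (map (substpow \<sigma> k) (factor_at ?u ?P ?L))))"
    by (rule pos_add[OF nep])
  have e3: "factor_at ?u ?P ?L = substpow \<sigma> m (y i)"
    by (rule factor_block[OF nep])
  show "pos (substpow \<sigma> k) ?u (pos (substpow \<sigma> m) y (i + 1)) = pos (substpow \<sigma> k) ?u ?P + int (length (substpow \<sigma> (m + k) (y i)))"
    unfolding e1 e2 e3 by (simp add: substpow_add)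
qed

lemma bs_comp: "bisubst (substpow \<sigma> (m + k)) y = bisubst (substpow \<sigma> k) (bisubst (substpow \<sigma> m) y)"
proof (rule sym, rule bisubst_eqI[OF nep])
  fix i j assume j: "j < length (substpow \<sigma> (m + k) (y i))"
  let ?u = "bisubst (substpow \<sigma> m) y"
  let ?P = "pos (substpow \<sigma> m) y i"
  let ?L = "length (substpow \<sigma> m (y i))"
  have e: "concat (map (substpow \<sigma> k) (factor_at ?u ?P ?L)) = substpow \<sigma> (m + k) (y i)"
    by (simp add: factor_block[OF nep] substpow_add)
  have "bisubst (substpow \<sigma> k) ?u (pos (substpow \<sigma> k) ?u ?P + int j) = concat (map (substpow \<sigma> k) (factor_at ?u ?P ?L)) ! j"
    by (rule bisubst_nth_block[OF nep]) (use j e in simp)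
  then show "bisubst (substpow \<sigma> k) ?u (pos (substpow \<sigma> (m + k)) y i + int j) = substpow \<sigma> (m + k) (y i) ! j"
    using e pos_comp[of k m y i] by simp
qed

lemma bs_at0: "j < length (substpow \<sigma> n (y 0)) \<Longrightarrow> bisubst (substpow \<sigma> n) y (int j) = substpow \<sigma> n (y 0) ! j"
  using bisubst_at[OF nep[of n], where j=j and y=y and i=0] by simp

lemma pos_1: "pos \<tau> y 1 = int (length (\<tau> (y 0)))"
  using pos_step[of \<tau> y 0] by simp

lemma bs_at1: "bisubst (substpow \<sigma> n) y (int (length (substpow \<sigma> n (y 0)))) = hd (substpow \<sigma> n (y 1))"
proof -
  have "bisubst (substpow \<sigma> n) y (pos (substpow \<sigma> n) y 1 + int 0) = substpow \<sigma> n (y 1) ! 0"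
    by (rule bisubst_at[OF nep]) (use nep in simp)
  then show ?thesis using nep[of n] by (simp add: pos_1 hd_conv_nth)
qed

lemma bs_shift_int: "bisubst (substpow \<sigma> n) (\<lambda>t. y (t + s)) = (\<lambda>t. bisubst (substpow \<sigma> n) y (t + pos (substpow \<sigma> n) y s))"
  by (rule bisubst_trans[OF nep])

lemma bs_shift1: "bisubst (substpow \<sigma> n) (shift y) = (shift ^^ length (substpow \<sigma> n (y 0))) (bisubst (substpow \<sigma> n) y)"
  unfolding shift_eq shift_pow bs_shift_int pos_1 by simp

lemma pos_nonneg: assumes "0 \<le> i" shows "0 \<le> pos (substpow \<sigma> n) y i"
proof -
  have "i \<le> pos (substpow \<sigma> n) y i" by (rule pos_ge_self[OF nep]) (rule assms)
  then show ?thesis using assms by linarith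
qed

end


lemma substpow_one[simp]: "substpow \<sigma> 1 = \<sigma>"
  by (rule ext) (simp add: substpow_def substw_def)

lemma substpow_Suc0_fun[simp]: "substpow \<sigma> (Suc 0) = \<sigma>"
  by (rule ext) (simp add: substpow_def substw_def)

lemma L2I: assumes "x \<in> Xsub \<sigma>" shows "(x 0, x 1) \<in> L2 \<sigma>"
  using assms unfolding L2_def by (auto intro!: bexI[of _ x] exI[of _ 0])

lemma L2E: assumes "(a, b) \<in> L2 \<sigma>" obtains y where "y \<in> cyl2 \<sigma> a b"
proof -
  obtain x i where x: "x \<in> Xsub \<sigma>" "x i = a" "x (i+1) = b" using assms unfolding L2_def by blast
  have "(\<lambda>t. x (t + i)) \<in> cyl2 \<sigma> a b"
    using x Xsub_trans[OF x(1), of i] unfolding cyl2_def by (simp add: add.commute)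
  then show ?thesis using that by blast
qed

lemma telescope:
  assumes cob: "\<forall>x\<in>Xsub \<sigma>. real_of_int (f x) = g (shift x) - g x" and x: "x \<in> Xsub \<sigma>"
  shows "real_of_int (\<Sum>j<L. f ((shift ^^ j) x)) = g ((shift ^^ L) x) - g x"
proof (induction L)
  case 0 then show ?case by simp
next
  case (Suc L)
  have "(shift ^^ L) x \<in> Xsub \<sigma>" by (rule shift_pow_X[OF x])
  then have "real_of_int (f ((shift ^^ L) x)) = g (shift ((shift ^^ L) x)) - g ((shift ^^ L) x)"
    using cob by blast
  then show ?case using Suc by simp
qed

context
  fixes \<sigma> :: "'a::finite \<Rightarrow> 'a list"
  assumes ne: "\<forall>a. \<sigma> a \<noteq> []"
begin

lemma Fsame:
  assumes const: "\<forall>(a, b)\<in>L2 \<sigma>. \<forall>j<length (substpow \<sigma> k a). \<exists>c. \<forall>x\<in>atom \<sigma> k a b j. f x = c"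
    and kn: "k \<le> n" and y: "y \<in> Xsub \<sigma>" and y': "y' \<in> Xsub \<sigma>" and y0: "y' 0 = y 0"
    and j: "j < length (substpow \<sigma> n (y 0))"
    and alt: "y' 1 = y 1 \<or> j + Max (range (\<lambda>c. length (substpow \<sigma> k c))) < length (substpow \<sigma> n (y 0))"
  shows "f ((shift ^^ j) (bisubst (substpow \<sigma> n) y)) = f ((shift ^^ j) (bisubst (substpow \<sigma> n) y'))"
proof -
  define m where "m = n - k"
  have nmk: "n = m + k" using kn unfolding m_def by simp
  let ?\<tau> = "substpow \<sigma> k"
  have ntau: "\<forall>a. ?\<tau> a \<noteq> []" by (rule nep[OF ne])
  define u where "u = bisubst (substpow \<sigma> m) y"
  define u' where "u' = bisubst (substpow \<sigma> m) y'"
  define W where "W = substpow \<sigma> m (y 0)"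
  have uX: "u \<in> Xsub \<sigma>" "u' \<in> Xsub \<sigma>" unfolding u_def u'_def using bs_X[OF ne] y y' by auto
  have uW: "\<forall>l<length W. u (int l) = W ! l"
  proof (intro allI impI)
    fix l assume "l < length W"
    then show "u (int l) = W ! l" unfolding u_def W_def using bs_at0[OF ne, where y=y and n=m and j=l] by simp
  qed
  have uW': "\<forall>l<length W. u' (int l) = W ! l"
  proof (intro allI impI)
    fix l assume "l < length W"
    then show "u' (int l) = W ! l" unfolding u'_def W_def using bs_at0[OF ne, where y=y' and n=m and j=l] y0 by simp
  qed
  have u1: "u (int (length W)) = hd (substpow \<sigma> m (y 1))"
    unfolding u_def W_def by (rule bs_at1[OF ne])
  have u1': "u' (int (length W)) = hd (substpow \<sigma> m (y' 1))"
    unfolding u'_def W_def using bs_at1[OF ne, where y=y' and n=m] y0 by simp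
  have posu: "pos ?\<tau> u (int l) = int (length (concat (map ?\<tau> (take l W))))" if "l \<le> length W" for l
  proof -
    have "pos ?\<tau> u (0 + int l) = pos ?\<tau> u 0 + int (length (concat (map ?\<tau> (factor_at u 0 l))))"
      by (rule pos_add[OF ntau])
    then show ?thesis using take_factor[OF uW that] by simp
  qed
  have posu': "pos ?\<tau> u' (int l) = int (length (concat (map ?\<tau> (take l W))))" if "l \<le> length W" for l
  proof -
    have "pos ?\<tau> u' (0 + int l) = pos ?\<tau> u' 0 + int (length (concat (map ?\<tau> (factor_at u' 0 l))))"
      by (rule pos_add[OF ntau])
    then show ?thesis using take_factor[OF uW' that] by simp
  qed
  have bsn: "bisubst (substpow \<sigma> n) y = bisubst ?\<tau> u" unfolding u_def nmk by (rule bs_comp[OF ne])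
  have bsn': "bisubst (substpow \<sigma> n) y' = bisubst ?\<tau> u'" unfolding u'_def nmk by (rule bs_comp[OF ne])
  have lenn: "length (substpow \<sigma> n (y 0)) = length (concat (map ?\<tau> W))"
    unfolding nmk W_def by (simp add: substpow_add)
  have jW: "int j < pos ?\<tau> u (int (length W))" using j lenn posu[of "length W"] by simp
  obtain i where i: "pos ?\<tau> u i \<le> int j" "int j < pos ?\<tau> u (i + 1)"
    using pos_ex[OF ntau] by blast
  have i0: "0 \<le> i"
  proof (rule ccontr)
    assume "\<not> 0 \<le> i" then have "i + 1 \<le> 0" by simp
    then have "pos ?\<tau> u (i+1) \<le> pos ?\<tau> u 0" by (rule pos_le[OF ntau])
    then show False using i by simp
  qed
  have iW: "i < int (length W)"
  proof (rule ccontr)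
    assume "\<not> i < int (length W)"
    then have "pos ?\<tau> u (int (length W)) \<le> pos ?\<tau> u i" by (intro pos_le[OF ntau]) simp
    then show False using i jW by simp
  qed
  define i0 where "i0 = nat i"
  have ii0: "i = int i0" using i0 unfolding i0_def by simp
  have i0W: "i0 < length W" using iW ii0 by simp
  have pe: "pos ?\<tau> u' i = pos ?\<tau> u i" unfolding ii0 using posu[of i0] posu'[of i0] i0W by simp
  define P where "P = pos ?\<tau> u i"
  have P0: "0 \<le> P" unfolding P_def using pos_le[OF ntau, of 0 i u] i0 by simp
  have step: "pos ?\<tau> u (i+1) = P + int (length (?\<tau> (u i)))" unfolding P_def by (rule pos_step)
  define j' where "j' = j - nat P"
  have Pj: "P \<le> int j" using i(1) unfolding P_def .
  have jj: "int j = P + int j'" unfolding j'_def using Pj P0 by (simp add: of_nat_diff)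
  have j'lt: "j' < length (?\<tau> (u i))" using i(2) step jj by simp
  define z where "z = (\<lambda>t. u (t + i))"
  define z' where "z' = (\<lambda>t. u' (t + i))"
  have zX: "z \<in> Xsub \<sigma>" "z' \<in> Xsub \<sigma>" using uX Xsub_trans unfolding z_def z'_def by auto
  have z0: "z' 0 = z 0" unfolding z_def z'_def ii0 using uW uW' i0W by simp
  have zz1: "z 1 = u (1 + i)" "z' 1 = u' (1 + i)" unfolding z_def z'_def by (simp_all add: add.commute)
  have z1: "z' 1 = z 1"
  proof (cases "i0 + 1 < length W")
    case True
    have "u (int (i0+1)) = W ! (i0+1)" "u' (int (i0+1)) = W ! (i0+1)" using uW uW' True by auto
    moreover have "1 + i = int (i0 + 1)" using ii0 by simp
    ultimately show ?thesis unfolding zz1 by simp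
  next
    case False
    then have e: "i0 + 1 = length W" using i0W by simp
    have e2: "1 + i = int (length W)" using e ii0 by simp
    have "y' 1 = y 1"
    proof (rule ccontr)
      assume "y' 1 \<noteq> y 1"
      then have lt: "j + Max (range (\<lambda>c. length (substpow \<sigma> k c))) < length (substpow \<sigma> n (y 0))"
        using alt by blast
      have mx: "length (?\<tau> (u i)) \<le> Max (range (\<lambda>c. length (substpow \<sigma> k c)))" by (rule Max_ge) auto
      have lt': "int j + int (Max (range (\<lambda>c. length (substpow \<sigma> k c)))) < int (length (substpow \<sigma> n (y 0)))"
        using lt by simp
      have mx': "int (length (?\<tau> (u i))) \<le> int (Max (range (\<lambda>c. length (substpow \<sigma> k c))))"
        using mx by simp
      have pW: "pos ?\<tau> u (int (length W)) = int (length (concat (map ?\<tau> W)))" using posu[of "length W"] by simp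
      have lenn': "int (length (substpow \<sigma> n (y 0))) = int (length (concat (map ?\<tau> W)))" using lenn by simp
      have "pos ?\<tau> u (i + 1) < pos ?\<tau> u (int (length W))"
        using lt' step jj lenn' pW mx' by linarith
      moreover have "i + 1 = int (length W)" using e2 by simp
      ultimately show False by simp
    qed
    then show ?thesis unfolding zz1 e2 using u1 u1' by simp
  qed
  have c: "(z 0, z 1) \<in> L2 \<sigma>" by (rule L2I) (rule zX(1))
  have zc: "z \<in> cyl2 \<sigma> (z 0) (z 1)" "z' \<in> cyl2 \<sigma> (z 0) (z 1)"
    unfolding cyl2_def using zX z0 z1 by auto
  have zu: "z 0 = u i" unfolding z_def by simp
  have j'lt2: "j' < length (substpow \<sigma> k (z 0))" using j'lt zu by simp
  have "\<forall>j<length (substpow \<sigma> k (z 0)). \<exists>c. \<forall>x\<in>atom \<sigma> k (z 0) (z 1) j. f x = c"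
    using bspec[OF const c] by simp
  then obtain C where C: "\<forall>x\<in>atom \<sigma> k (z 0) (z 1) j'. f x = C" using j'lt2 by blast
  have key: "(shift ^^ j) (bisubst ?\<tau> u) = (shift ^^ j') (bisubst ?\<tau> z)"
  proof -
    have "bisubst ?\<tau> z = (\<lambda>t. bisubst ?\<tau> u (t + P))" unfolding z_def P_def by (rule bs_shift_int[OF ne])
    then show ?thesis unfolding shift_pow using jj by (simp add: algebra_simps)
  qed
  have key': "(shift ^^ j) (bisubst ?\<tau> u') = (shift ^^ j') (bisubst ?\<tau> z')"
  proof -
    have "bisubst ?\<tau> z' = (\<lambda>t. bisubst ?\<tau> u' (t + P))" unfolding z'_def P_def pe[symmetric] by (rule bs_shift_int[OF ne])
    then show ?thesis unfolding shift_pow using jj by (simp add: algebra_simps)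
  qed
  have m1: "(shift ^^ j') (bisubst ?\<tau> z) \<in> atom \<sigma> k (z 0) (z 1) j'"
    unfolding atom_def by (intro imageI) (rule zc(1))
  have m2: "(shift ^^ j') (bisubst ?\<tau> z') \<in> atom \<sigma> k (z 0) (z 1) j'"
    unfolding atom_def by (intro imageI) (rule zc(2))
  show ?thesis unfolding bsn bsn' key key' using C m1 m2 by simp
qed

lemma phi_eval:
  assumes const: "\<forall>(a, b)\<in>L2 \<sigma>. \<forall>j<length (substpow \<sigma> k a). \<exists>c. \<forall>x\<in>atom \<sigma> k a b j. f x = c"
    and kn: "k \<le> n" and y: "y \<in> cyl2 \<sigma> a b"
  shows "phi \<sigma> f n (a, b) = real_of_int (\<Sum>j<length (substpow \<sigma> n a). f ((shift ^^ j) (bisubst (substpow \<sigma> n) y)))"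
proof -
  have yX: "y \<in> Xsub \<sigma>" "y 0 = a" "y 1 = b" using y unfolding cyl2_def by auto
  have cv: "constval f (atom \<sigma> n a b j) = f ((shift ^^ j) (bisubst (substpow \<sigma> n) y))"
    if j: "j < length (substpow \<sigma> n a)" for j
  proof -
    have mem: "(shift ^^ j) (bisubst (substpow \<sigma> n) y) \<in> atom \<sigma> n a b j"
      unfolding atom_def using y by blast
    then have "(SOME x. x \<in> atom \<sigma> n a b j) \<in> atom \<sigma> n a b j"
      by (rule someI[where P="\<lambda>x. x \<in> atom \<sigma> n a b j"])
    then obtain y' where y': "y' \<in> cyl2 \<sigma> a b"
      and e: "(SOME x. x \<in> atom \<sigma> n a b j) = (shift ^^ j) (bisubst (substpow \<sigma> n) y')"
      unfolding atom_def by blast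
    have y'X: "y' \<in> Xsub \<sigma>" "y' 0 = a" "y' 1 = b" using y' unfolding cyl2_def by auto
    have "f ((shift ^^ j) (bisubst (substpow \<sigma> n) y)) = f ((shift ^^ j) (bisubst (substpow \<sigma> n) y'))"
      by (rule Fsame[OF const kn yX(1) y'X(1)]) (use yX y'X j in auto)
    then show ?thesis unfolding constval_def e by simp
  qed
  have "(\<Sum>j<length (substpow \<sigma> n a). constval f (atom \<sigma> n a b j)) =
        (\<Sum>j<length (substpow \<sigma> n a). f ((shift ^^ j) (bisubst (substpow \<sigma> n) y)))"
    by (rule sum.cong) (auto simp: cv)
  then show ?thesis unfolding phi_def by simp
qed

lemma phi_g:
  assumes const: "\<forall>(a, b)\<in>L2 \<sigma>. \<forall>j<length (substpow \<sigma> k a). \<exists>c. \<forall>x\<in>atom \<sigma> k a b j. f x = c"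
    and cob: "\<forall>x\<in>Xsub \<sigma>. real_of_int (f x) = g (shift x) - g x"
    and kn: "k \<le> n" and y: "y \<in> cyl2 \<sigma> a b"
  shows "phi \<sigma> f n (a, b) = g (bisubst (substpow \<sigma> n) (shift y)) - g (bisubst (substpow \<sigma> n) y)"
proof -
  have yX: "y \<in> Xsub \<sigma>" "y 0 = a" "y 1 = b" using y unfolding cyl2_def by auto
  have bX: "bisubst (substpow \<sigma> n) y \<in> Xsub \<sigma>" by (rule bs_X[OF ne yX(1)])
  show ?thesis
    unfolding phi_eval[OF const kn y] telescope[OF cob bX] bs_shift1[OF ne] yX(2) ..
qed

lemma phi_rec:
  assumes const: "\<forall>(a, b)\<in>L2 \<sigma>. \<forall>j<length (substpow \<sigma> k a). \<exists>c. \<forall>x\<in>atom \<sigma> k a b j. f x = c"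
    and cob: "\<forall>x\<in>Xsub \<sigma>. real_of_int (f x) = g (shift x) - g x"
    and kn: "k \<le> n" and ab: "(a, b) \<in> L2 \<sigma>"
  shows "phi \<sigma> f (Suc n) (a, b) =
     (\<Sum>i<length (\<sigma> a). phi \<sigma> f n ((\<sigma> a @ [hd (\<sigma> b)]) ! i, (\<sigma> a @ [hd (\<sigma> b)]) ! (i+1)))"
proof -
  obtain y where y: "y \<in> cyl2 \<sigma> a b" using L2E[OF ab] by blast
  have yX: "y \<in> Xsub \<sigma>" "y 0 = a" "y 1 = b" using y unfolding cyl2_def by auto
  define u where "u = bisubst \<sigma> y"
  define w where "w = \<sigma> a @ [hd (\<sigma> b)]"
  have uX: "u \<in> Xsub \<sigma>" unfolding u_def using bs_X[OF ne yX(1), where n=1] by simp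
  have uw: "u (int i) = w ! i" if "i \<le> length (\<sigma> a)" for i
  proof (cases "i < length (\<sigma> a)")
    case True then show ?thesis
      using bs_at0[OF ne, where n=1 and y=y and j=i] yX unfolding u_def w_def by (simp add: nth_append)
  next
    case False then have "i = length (\<sigma> a)" using that by simp
    then show ?thesis using bs_at1[OF ne, where n=1 and y=y] yX unfolding u_def w_def by simp
  qed
  define G where "G = (\<lambda>i::nat. g (bisubst (substpow \<sigma> n) (\<lambda>t. u (t + int i))))"
  have Gi: "phi \<sigma> f n (w ! i, w ! Suc i) = G (Suc i) - G i" if "i < length (\<sigma> a)" for i
  proof -
    define z where "z = (\<lambda>t. u (t + int i))"
    have z01: "z 0 = w ! i" "z 1 = w ! (i+1)"
      unfolding z_def using uw[of i] uw[of "i+1"] that by (simp_all add: add.commute)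
    have zc: "z \<in> cyl2 \<sigma> (w ! i) (w ! Suc i)"
      unfolding cyl2_def using Xsub_trans[OF uX] z01 unfolding z_def by simp
    have "phi \<sigma> f n (w ! i, w ! Suc i) = g (bisubst (substpow \<sigma> n) (shift z)) - g (bisubst (substpow \<sigma> n) z)"
      by (rule phi_g[OF const cob kn zc])
    moreover have "shift z = (\<lambda>t. u (t + int (Suc i)))" unfolding shift_eq z_def by (simp add: algebra_simps)
    ultimately show ?thesis unfolding G_def z_def by simp
  qed
  have b1: "bisubst (substpow \<sigma> (Suc n)) y = bisubst (substpow \<sigma> n) u"
    using bs_comp[OF ne, of 1 n y] unfolding u_def by simp
  have b2: "bisubst (substpow \<sigma> (Suc n)) (shift y) = bisubst (substpow \<sigma> n) (\<lambda>t. u (t + int (length (\<sigma> a))))"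
  proof -
    have "bisubst (substpow \<sigma> (Suc n)) (shift y) = bisubst (substpow \<sigma> n) (bisubst (substpow \<sigma> 1) (shift y))"
      using bs_comp[OF ne, of 1 n "shift y"] by simp
    also have "bisubst (substpow \<sigma> 1) (shift y) = (\<lambda>t. u (t + int (length (\<sigma> a))))"
      using bs_shift1[OF ne, of 1 y] yX unfolding u_def shift_pow by simp
    finally show ?thesis .
  qed
  have kn1: "k \<le> Suc n" using kn by simp
  have "phi \<sigma> f (Suc n) (a, b) = G (length (\<sigma> a)) - G 0"
    unfolding phi_g[OF const cob kn1 y] G_def b1 b2 by simp
  also have "\<dots> = (\<Sum>i<length (\<sigma> a). G (Suc i) - G i)" by (rule sum_lessThan_telescope[symmetric])
  also have "\<dots> = (\<Sum>i<length (\<sigma> a). phi \<sigma> f n (w ! i, w ! (i+1)))"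
    by (rule sum.cong) (auto simp: Gi)
  finally show ?thesis unfolding w_def .
qed

end


lemma count_concat_map:
  fixes \<sigma> :: "'a::finite \<Rightarrow> 'b list"
  shows "count_list (concat (map \<sigma> w)) a = (\<Sum>c\<in>UNIV. count_list w c * count_list (\<sigma> c) a)"
proof (induction w)
  case Nil then show ?case by simp
next
  case (Cons x w)
  have "(\<Sum>c\<in>UNIV. count_list (x # w) c * count_list (\<sigma> c) a) =
        (\<Sum>c\<in>UNIV. (if x = c then count_list (\<sigma> c) a else 0) + count_list w c * count_list (\<sigma> c) a)"
    by (rule sum.cong) (auto simp: algebra_simps)
  also have "\<dots> = count_list (\<sigma> x) a + (\<Sum>c\<in>UNIV. count_list w c * count_list (\<sigma> c) a)"
    by (simp add: sum.distrib)
  finally show ?case using Cons by simp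
qed

lemma matpow_count:
  fixes \<sigma> :: "'a::finite \<Rightarrow> 'a list"
  shows "matpow (substmat \<sigma>) n a b = count_list (substpow \<sigma> n b) a"
proof (induction n arbitrary: a b)
  case 0 then show ?case by auto
next
  case (Suc n)
  have "matpow (substmat \<sigma>) (Suc n) a b = (\<Sum>c\<in>UNIV. substmat \<sigma> a c * matpow (substmat \<sigma>) n c b)"
    by simp
  also have "\<dots> = (\<Sum>c\<in>UNIV. count_list (\<sigma> c) a * count_list (substpow \<sigma> n b) c)"
    by (simp only: Suc.IH) (simp add: substmat_def)
  also have "\<dots> = count_list (concat (map \<sigma> (substpow \<sigma> n b))) a"
    by (simp add: count_concat_map mult.commute)
  finally show ?case by (simp add: substpow_Suc2)
qed

lemma length_concat_map_ge2:
  assumes "\<forall>c. B \<le> length (f c)"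
  shows "length w * B \<le> length (concat (map f w))"
proof (induction w)
  case Nil then show ?case by simp
next
  case (Cons x w)
  have "B \<le> length (f x)" using assms by blast
  then show ?case using Cons by simp
qed

lemma growth:
  fixes \<sigma> :: "'a::finite \<Rightarrow> 'a list"
  assumes prim: "primitive \<sigma>" and card2: "CARD('a) \<ge> 2"
  shows "\<exists>N0. \<forall>N\<ge>N0. \<forall>c. B \<le> length (substpow \<sigma> N c)"
proof -
  have ne: "\<forall>a. \<sigma> a \<noteq> []" using prim unfolding primitive_def nonerasing_def by blast
  obtain p where p: "p > 0" "\<forall>a b. matpow (substmat \<sigma>) p a b > 0"
    using prim unfolding primitive_def by blast
  have inset: "a \<in> set (substpow \<sigma> p b)" for a b
  proof -
    have "count_list (substpow \<sigma> p b) a > 0" using p(2) by (simp add: matpow_count)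
    then show ?thesis by (metis count_list_0_iff less_irrefl)
  qed
  have lp: "2 \<le> length (substpow \<sigma> p b)" for b
  proof -
    have "set (substpow \<sigma> p b) = UNIV" using inset by auto
    then have "CARD('a) \<le> length (substpow \<sigma> p b)" by (metis card_length)
    then show ?thesis using card2 by simp
  qed
  have pow: "2 ^ j \<le> length (substpow \<sigma> (j * p) b)" for j b
  proof (induction j arbitrary: b)
    case 0 then show ?case by simp
  next
    case (Suc j)
    have eq: "substpow \<sigma> (Suc j * p) b = concat (map (substpow \<sigma> (j * p)) (substpow \<sigma> p b))"
      using substpow_add[of \<sigma> p "j * p" b] by (simp add: add.commute)
    have "(2::nat) ^ Suc j = 2 * 2 ^ j" by simp
    also have "\<dots> \<le> length (substpow \<sigma> p b) * 2 ^ j" using lp[of b] by simp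
    also have "\<dots> \<le> length (concat (map (substpow \<sigma> (j * p)) (substpow \<sigma> p b)))"
      by (rule length_concat_map_ge2) (use Suc in blast)
    also have "\<dots> = length (substpow \<sigma> (Suc j * p) b)" using eq by simp
    finally show ?case .
  qed
  have mono1: "length (substpow \<sigma> n b) \<le> length (substpow \<sigma> (Suc n) b)" for n b
    unfolding substpow_Suc2 by (rule length_concat_map_ge[OF ne])
  have mono: "n \<le> n' \<Longrightarrow> length (substpow \<sigma> n b) \<le> length (substpow \<sigma> n' b)" for n n' b
    by (rule lift_Suc_mono_le[of "\<lambda>n. length (substpow \<sigma> n b)"]) (use mono1 in auto)
  show ?thesis
  proof (intro exI[of _ "B * p"] allI impI)
    fix N c assume N: "B * p \<le> N"
    have "B < 2 ^ B" by (rule less_exp)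
    also have "\<dots> \<le> length (substpow \<sigma> (B * p) c)" by (rule pow)
    also have "\<dots> \<le> length (substpow \<sigma> N c)" by (rule mono[OF N])
    finally show "B \<le> length (substpow \<sigma> N c)" by simp
  qed
qed


lemma bad_unique:
  fixes x :: real and N :: nat and z z' :: int
  assumes N: "N > 0" and j: "j < N" and j': "j' < N"
    and b1: "\<bar>x - real j / real N - z\<bar> < 1 / (2 * real N)"
    and b2: "\<bar>x - real j' / real N - z'\<bar> < 1 / (2 * real N)"
  shows "j = j'"
proof -
  define A1 where "A1 = x - real j / real N - of_int z"
  define A2 where "A2 = x - real j' / real N - of_int z'"
  define q where "q = real j' - real j + real N * (of_int z' - of_int z)"
  have Npos: "real N > 0" using N by simp
  have q_eq: "q = real N * (A1 - A2)" unfolding q_def A1_def A2_def using Npos by (simp add: field_simps)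
  have "\<bar>A1 - A2\<bar> \<le> \<bar>A1\<bar> + \<bar>A2\<bar>" by (rule abs_triangle_ineq4)
  also have "\<dots> < 1 / (2 * real N) + 1 / (2 * real N)" using b1 b2 unfolding A1_def A2_def by linarith
  also have "\<dots> = 1 / real N" by simp
  finally have "\<bar>A1 - A2\<bar> < 1 / real N" .
  then have "real N * \<bar>A1 - A2\<bar> < real N * (1 / real N)" by (rule mult_strict_left_mono) (rule Npos)
  then have "\<bar>q\<bar> < 1" unfolding q_eq using Npos by (simp add: abs_mult)
  moreover have "q = of_int (int j' - int j + int N * (z' - z))" unfolding q_def by simp
  ultimately have "\<bar>int j' - int j + int N * (z' - z)\<bar> < 1"
    by (metis of_int_abs of_int_less_1_iff)
  then have e: "int j' - int j = int N * (z - z')" by (simp add: algebra_simps)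
  show ?thesis
  proof (cases "z = z'")
    case True then show ?thesis using e by simp
  next
    case False
    then have "\<bar>z - z'\<bar> \<ge> 1" by simp
    then have "int N * 1 \<le> int N * \<bar>z - z'\<bar>" by (intro mult_left_mono) simp_all
    then have "\<bar>int N * (z - z')\<bar> \<ge> int N" by (simp add: abs_mult)
    moreover have "\<bar>int j' - int j\<bar> < int N" using j j' by simp
    ultimately show ?thesis using e by simp
  qed
qed

lemma round_exists:
  fixes Phi :: "'a::finite \<times> 'a \<Rightarrow> int" and D :: "'a \<Rightarrow> real" and S :: "('a \<times> 'a) set"
  assumes approx: "\<forall>(a, b)\<in>S. \<bar>real_of_int (Phi (a, b)) - (D b - D a)\<bar> < 1 / (2 * (real CARD('a) + 1))"
  shows "\<exists>h. \<forall>(a, b)\<in>S. real_of_int (Phi (a, b)) = h b - h a"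
proof -
  define N where "N = CARD('a) + 1"
  have N0: "N > 0" unfolding N_def by simp
  define \<delta> where "\<delta> = 1 / (2 * real N)"
  have \<delta>0: "\<delta> > 0" unfolding \<delta>_def using N0 by simp
  define bad where "bad = (\<lambda>a j. \<exists>z::int. \<bar>(D a - 1/2) - real j / real N - of_int z\<bar> < \<delta>)"
  have card1: "card {j\<in>{..<N}. bad a j} \<le> 1" for a
  proof -
    have "\<forall>j1\<in>{j\<in>{..<N}. bad a j}. \<forall>j2\<in>{j\<in>{..<N}. bad a j}. j1 = j2"
    proof (intro ballI)
      fix j1 j2 assume "j1 \<in> {j\<in>{..<N}. bad a j}" "j2 \<in> {j\<in>{..<N}. bad a j}"
      then obtain z1 z2 where "j1 < N" "j2 < N"
        "\<bar>(D a - 1/2) - real j1 / real N - of_int z1\<bar> < 1 / (2 * real N)"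
        "\<bar>(D a - 1/2) - real j2 / real N - of_int z2\<bar> < 1 / (2 * real N)"
        unfolding bad_def \<delta>_def by auto
      then show "j1 = j2" using bad_unique[OF N0] by blast
    qed
    then show ?thesis using card_le_Suc0_iff_eq[of "{j\<in>{..<N}. bad a j}"] by simp
  qed
  have "card (\<Union>a. {j\<in>{..<N}. bad a j}) \<le> (\<Sum>a\<in>UNIV. card {j\<in>{..<N}. bad a j})"
    by (rule card_UN_le) simp
  also have "\<dots> \<le> (\<Sum>a\<in>(UNIV::'a set). 1)" by (rule sum_mono) (rule card1)
  also have "\<dots> = CARD('a)" by simp
  finally have cU: "card (\<Union>a. {j\<in>{..<N}. bad a j}) < N" unfolding N_def by simp
  have "\<not> {..<N} \<subseteq> (\<Union>a. {j\<in>{..<N}. bad a j})"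
  proof
    assume "{..<N} \<subseteq> (\<Union>a. {j\<in>{..<N}. bad a j})"
    then have "card {..<N} \<le> card (\<Union>a. {j\<in>{..<N}. bad a j})" by (rule card_mono[rotated]) auto
    then show False using cU by simp
  qed
  then obtain j where j: "j < N" "\<forall>a. \<not> bad a j" by auto
  define t where "t = real j / real N"
  define r where "r = (\<lambda>a. \<lfloor>D a - t + 1/2\<rfloor>)"
  have alpha: "\<delta> \<le> D a - t + 1/2 - of_int (r a) \<and> D a - t + 1/2 - of_int (r a) \<le> 1 - \<delta>" for a
  proof -
    have nb: "\<forall>z::int. \<not> \<bar>(D a - 1/2) - t - of_int z\<bar> < \<delta>" using j(2) unfolding bad_def t_def by blast
    have f1: "of_int (r a) \<le> D a - t + 1/2" unfolding r_def by (rule of_int_floor_le)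
    have f2: "D a - t + 1/2 < of_int (r a) + 1" unfolding r_def by (rule real_of_int_floor_add_one_gt)
    have n1: "\<not> \<bar>(D a - 1/2) - t - of_int (r a - 1)\<bar> < \<delta>" using nb by blast
    have n2: "\<not> \<bar>(D a - 1/2) - t - of_int (r a)\<bar> < \<delta>" using nb by blast
    show ?thesis using f1 f2 n1 n2 by (simp add: abs_if split: if_splits)
  qed
  have "\<forall>(a, b)\<in>S. real_of_int (Phi (a, b)) = real_of_int (r b) - real_of_int (r a)"
  proof (intro ballI, clarify)
    fix a b assume ab: "(a, b) \<in> S"
    have ap0: "\<bar>real_of_int (Phi (a, b)) - (D b - D a)\<bar> < 1 / (2 * (real CARD('a) + 1))"
      using bspec[OF approx ab] by (simp only: case_prod_conv)
    have \<delta>N: "\<delta> = 1 / (2 * (real CARD('a) + 1))" unfolding \<delta>_def N_def by simp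
    have ap: "\<bar>real_of_int (Phi (a, b)) - (D b - D a)\<bar> < \<delta>"
      unfolding \<delta>N by (rule ap0)
    have "r b = r a + Phi (a, b)"
      unfolding r_def
    proof (rule floor_unique)
      show "of_int (\<lfloor>D a - t + 1/2\<rfloor> + Phi (a, b)) \<le> D b - t + 1/2"
        using alpha[of a] ap unfolding r_def by (simp add: abs_if split: if_splits; linarith)
      show "D b - t + 1/2 < of_int (\<lfloor>D a - t + 1/2\<rfloor> + Phi (a, b)) + 1"
        using alpha[of a] ap unfolding r_def by (simp add: abs_if split: if_splits; linarith)
    qed
    then show "real_of_int (Phi (a, b)) = real_of_int (r b) - real_of_int (r a)" by simp
  qed
  note hh = this
  show ?thesis by (rule exI[of _ "\<lambda>a. real_of_int (r a)"]) (use hh in simp)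
qed


abbreviation PT :: "(int \<Rightarrow> 'a) topology" where
  "PT \<equiv> product_topology (\<lambda>_. discrete_topology UNIV) UNIV"

lemma topspace_PT[simp]: "topspace PT = UNIV"
  by (simp add: PiE_UNIV_domain)

lemma topspace_Xtop[simp]: "topspace (Xtop \<sigma>) = Xsub \<sigma>"
  unfolding Xtop_def by simp

lemma cyl_open:
  assumes "finite F"
  shows "openin PT {x'. \<forall>t\<in>F. x' t = x t}"
proof -
  have e: "{x'. \<forall>t\<in>F. x' t = x t} = Pi\<^sub>E UNIV (\<lambda>t. if t \<in> F then {x t} else UNIV)"
    by (auto simp: PiE_UNIV_domain split: if_splits)
  have "finite {i \<in> UNIV. (\<lambda>t. if t \<in> F then {x t} else UNIV) i \<noteq> topspace (discrete_topology UNIV)}"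
    by (rule finite_subset[OF _ assms]) auto
  then show ?thesis unfolding e by (subst openin_PiE_gen) auto
qed

lemma closed_X: "closedin PT (Xsub \<sigma>)"
proof -
  have "openin PT (UNIV - Xsub \<sigma>)"
  proof (subst openin_subopen, intro ballI)
    fix x assume "x \<in> UNIV - Xsub \<sigma>"
    then obtain i m where nm: "\<forall>n a. \<not> sublist (factor_at x i m) (substpow \<sigma> n a)"
      unfolding Xsub_def by blast
    define U where "U = {x'. \<forall>t\<in>{i..<i + int m}. x' t = x t}"
    have "openin PT U" unfolding U_def by (rule cyl_open) simp
    moreover have "x \<in> U" unfolding U_def by simp
    moreover have "U \<subseteq> UNIV - Xsub \<sigma>"
    proof
      fix x' assume "x' \<in> U"
      then have "factor_at x' i m = factor_at x i m" unfolding U_def factor_at_def by simp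
      then have "\<not> (\<exists>n a. sublist (factor_at x' i m) (substpow \<sigma> n a))" using nm by simp
      then show "x' \<in> UNIV - Xsub \<sigma>" unfolding Xsub_def by blast
    qed
    ultimately show "\<exists>T. openin PT T \<and> x \<in> T \<and> T \<subseteq> UNIV - Xsub \<sigma>" by blast
  qed
  then show ?thesis unfolding closedin_def by simp
qed

lemma compact_X: "compactin PT (Xsub (\<sigma> :: 'a::finite \<Rightarrow> 'a list))"
proof (rule closedin_compact_space[OF _ closed_X])
  show "compact_space (PT :: (int \<Rightarrow> 'a) topology)"
    by (simp add: compact_space_product_topology compact_space_discrete_topology)
qed

lemma local_uc:
  fixes g :: "(int \<Rightarrow> 'a) \<Rightarrow> real" and e :: real
  assumes g: "continuous_map (Xtop \<sigma>) euclidean g" and e: "0 < e" and x: "x \<in> Xsub \<sigma>"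
  shows "\<exists>R::nat. \<forall>x'\<in>Xsub \<sigma>. (\<forall>t. \<bar>t\<bar> \<le> int R \<longrightarrow> x' t = x t) \<longrightarrow> \<bar>g x' - g x\<bar> < e"
proof -
  have "openin (Xtop \<sigma>) {y \<in> topspace (Xtop \<sigma>). g y \<in> ball (g x) e}"
    by (rule openin_continuous_map_preimage[OF g]) simp
  then have op: "openin (subtopology PT (Xsub \<sigma>)) {y \<in> Xsub \<sigma>. g y \<in> ball (g x) e}"
    unfolding topspace_Xtop unfolding Xtop_def .
  then have "\<exists>U. openin PT U \<and> {y \<in> Xsub \<sigma>. g y \<in> ball (g x) e} = U \<inter> Xsub \<sigma>"
    by (simp only: openin_subtopology)
  then obtain U where UU: "openin PT U \<and> {y \<in> Xsub \<sigma>. g y \<in> ball (g x) e} = U \<inter> Xsub \<sigma>"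
    by (rule exE)
  have U: "openin PT U" "{y \<in> Xsub \<sigma>. g y \<in> ball (g x) e} = U \<inter> Xsub \<sigma>" using UU by simp_all
  have "x \<in> {y \<in> Xsub \<sigma>. g y \<in> ball (g x) e}" using x e by simp
  then have "x \<in> U \<inter> Xsub \<sigma>" unfolding U(2) .
  then have xU: "x \<in> U" by (rule IntD1)
  have "\<forall>x\<in>U. \<exists>W. finite {i \<in> UNIV. W i \<noteq> topspace (discrete_topology UNIV)} \<and>
      (\<forall>i\<in>UNIV. openin (discrete_topology UNIV) (W i)) \<and> x \<in> Pi\<^sub>E UNIV W \<and> Pi\<^sub>E UNIV W \<subseteq> U"
    using U(1) unfolding openin_product_topology_alt .
  then obtain W where W: "finite {i \<in> UNIV. W i \<noteq> topspace (discrete_topology UNIV)}"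
      "x \<in> Pi\<^sub>E UNIV W" "Pi\<^sub>E UNIV W \<subseteq> U"
    using xU by blast
  define F where "F = {i. W i \<noteq> UNIV}"
  have fF: "finite F" using W(1) unfolding F_def by simp
  define R where "R = Max (insert 0 ((\<lambda>i. nat \<bar>i\<bar>) ` F))"
  have RF: "\<bar>i\<bar> \<le> int R" if "i \<in> F" for i
  proof -
    have "nat \<bar>i\<bar> \<le> R" unfolding R_def using fF that by (intro Max_ge) auto
    then show ?thesis by simp
  qed
  show ?thesis
  proof (intro exI[of _ R] ballI impI)
    fix x' assume x': "x' \<in> Xsub \<sigma>" and ag: "\<forall>t. \<bar>t\<bar> \<le> int R \<longrightarrow> x' t = x t"
    have "x' \<in> Pi\<^sub>E UNIV W"
      unfolding PiE_UNIV_domain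
    proof (intro Pi_I)
      fix i :: int
      show "x' i \<in> W i"
      proof (cases "i \<in> F")
        case True
        then have "x' i = x i" using ag RF by blast
        moreover have "x i \<in> W i" using W(2) by (auto simp: PiE_UNIV_domain)
        ultimately show ?thesis by simp
      next
        case False then show ?thesis unfolding F_def by simp
      qed
    qed
    then have "x' \<in> U \<inter> Xsub \<sigma>" using W(3) x' by auto
    then have "g x' \<in> ball (g x) e" using U(2) by blast
    then show "\<bar>g x' - g x\<bar> < e" by (simp add: dist_real_def abs_minus_commute)
  qed
qed

lemma unif_cont:
  fixes \<sigma> :: "'a::finite \<Rightarrow> 'a list" and g :: "(int \<Rightarrow> 'a) \<Rightarrow> real" and e :: real
  assumes g: "continuous_map (Xtop \<sigma>) euclidean g" and e: "0 < e"
  shows "\<exists>R::nat. \<forall>x\<in>Xsub \<sigma>. \<forall>x'\<in>Xsub \<sigma>. (\<forall>t. \<bar>t\<bar> \<le> int R \<longrightarrow> x t = x' t) \<longrightarrow> \<bar>g x - g x'\<bar> < e"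
proof -
  have e2: "0 < e / 2" using e by simp
  have "\<forall>x\<in>Xsub \<sigma>. \<exists>R::nat. \<forall>x'\<in>Xsub \<sigma>. (\<forall>t. \<bar>t\<bar> \<le> int R \<longrightarrow> x' t = x t) \<longrightarrow> \<bar>g x' - g x\<bar> < e / 2"
  proof (intro ballI)
    fix x assume "x \<in> Xsub \<sigma>"
    then show "\<exists>R::nat. \<forall>x'\<in>Xsub \<sigma>. (\<forall>t. \<bar>t\<bar> \<le> int R \<longrightarrow> x' t = x t) \<longrightarrow> \<bar>g x' - g x\<bar> < e / 2"
      by (rule local_uc[OF g e2])
  qed
  then have "\<exists>Rf. \<forall>x\<in>Xsub \<sigma>. \<forall>x'\<in>Xsub \<sigma>. (\<forall>t. \<bar>t\<bar> \<le> int (Rf x) \<longrightarrow> x' t = x t) \<longrightarrow> \<bar>g x' - g x\<bar> < e / 2"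
    by (rule bchoice)
  then obtain Rf where Rf: "\<forall>x\<in>Xsub \<sigma>. \<forall>x'\<in>Xsub \<sigma>. (\<forall>t. \<bar>t\<bar> \<le> int (Rf x) \<longrightarrow> x' t = x t) \<longrightarrow> \<bar>g x' - g x\<bar> < e / 2"
    by (rule exE)
  define C where "C = (\<lambda>x. {x'. \<forall>t\<in>{- int (Rf x)..int (Rf x)}. x' t = x t})"
  have Co: "\<forall>U\<in>C ` Xsub \<sigma>. openin PT U" unfolding C_def by (auto intro: cyl_open)
  have cov: "Xsub \<sigma> \<subseteq> \<Union> (C ` Xsub \<sigma>)" unfolding C_def by auto
  have cX: "compactin PT (Xsub \<sigma>)" by (rule compact_X)
  then have "\<forall>\<U>. (\<forall>U\<in>\<U>. openin PT U) \<and> Xsub \<sigma> \<subseteq> \<Union>\<U> \<longrightarrow> (\<exists>\<F>. finite \<F> \<and> \<F> \<subseteq> \<U> \<and> Xsub \<sigma> \<subseteq> \<Union>\<F>)"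
    unfolding compactin_def by (rule conjunct2)
  then have "(\<forall>U\<in>C ` Xsub \<sigma>. openin PT U) \<and> Xsub \<sigma> \<subseteq> \<Union> (C ` Xsub \<sigma>) \<longrightarrow> (\<exists>\<F>. finite \<F> \<and> \<F> \<subseteq> C ` Xsub \<sigma> \<and> Xsub \<sigma> \<subseteq> \<Union>\<F>)"
    by (rule spec)
  then have "\<exists>\<F>. finite \<F> \<and> \<F> \<subseteq> C ` Xsub \<sigma> \<and> Xsub \<sigma> \<subseteq> \<Union>\<F>"
    using conjI[OF Co cov] by (rule mp)
  then obtain FF where FF0: "finite FF \<and> FF \<subseteq> C ` Xsub \<sigma> \<and> Xsub \<sigma> \<subseteq> \<Union> FF" by (rule exE)
  have FF: "finite FF" "FF \<subseteq> C ` Xsub \<sigma>" "Xsub \<sigma> \<subseteq> \<Union> FF" using FF0 by simp_all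
  obtain F' where F': "F' \<subseteq> Xsub \<sigma>" "finite F'" "FF = C ` F'"
    using finite_subset_image[OF FF(1) FF(2)] by blast
  define R where "R = Max (insert 0 (Rf ` F'))"
  have RF: "Rf x0 \<le> R" if "x0 \<in> F'" for x0 unfolding R_def using F'(2) that by (intro Max_ge) auto
  show ?thesis
  proof (intro exI[of _ R] ballI impI)
    fix x x' assume x: "x \<in> Xsub \<sigma>" and x': "x' \<in> Xsub \<sigma>" and ag: "\<forall>t. \<bar>t\<bar> \<le> int R \<longrightarrow> x t = x' t"
    obtain x0 where x0: "x0 \<in> F'" "x \<in> C x0" using FF(3) F'(3) x by auto
    have x0X: "x0 \<in> Xsub \<sigma>" using x0 F' by auto
    have a1: "\<forall>t. \<bar>t\<bar> \<le> int (Rf x0) \<longrightarrow> x t = x0 t"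
    proof (intro allI impI)
      fix t :: int assume "\<bar>t\<bar> \<le> int (Rf x0)"
      then have "t \<in> {- int (Rf x0)..int (Rf x0)}" by (auto simp: abs_le_iff)
      then show "x t = x0 t" using x0(2) unfolding C_def by blast
    qed
    have a2: "\<forall>t. \<bar>t\<bar> \<le> int (Rf x0) \<longrightarrow> x' t = x0 t"
    proof (intro allI impI)
      fix t :: int assume t: "\<bar>t\<bar> \<le> int (Rf x0)"
      have "int (Rf x0) \<le> int R" using RF[OF x0(1)] by simp
      then have "x t = x' t" using ag t by auto
      then show "x' t = x0 t" using a1 t by auto
    qed
    have "\<bar>g x - g x0\<bar> < e / 2" using Rf x0X x a1 by blast
    moreover have "\<bar>g x' - g x0\<bar> < e / 2" using Rf x0X x' a2 by blast
    ultimately show "\<bar>g x - g x'\<bar> < e" by linarith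
  qed
qed


lemma linear_funpow:
  fixes A :: "'a::real_vector \<Rightarrow> 'a"
  assumes lA: "linear A" shows "linear (A ^^ m)"
proof (induction m)
  case 0
  have "A ^^ 0 = (\<lambda>x. x)" by (rule ext) simp
  then show ?case by (simp add: linear_iff)
next
  case (Suc m)
  have "linear (A \<circ> (A ^^ m))" by (rule linear_compose[OF Suc.IH lA])
  then show ?case by (simp add: comp_def)
qed

lemma chain_stab:
  fixes A :: "real^'n \<Rightarrow> real^'n" and B :: "(real^'n) set" and S :: "'n set"
  assumes lin: "linear A" and sB: "subspace B" and AB: "\<And>v. v \<in> B \<Longrightarrow> A v \<in> B"
    and UB: "\<And>v. (\<forall>p\<in>S. v $ p = 0) \<Longrightarrow> v \<in> B"
    and M: "(A ^^ M) v \<in> B" and m: "card S \<le> m"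
  shows "(A ^^ m) v \<in> B"
proof -
  define W where "W = (\<lambda>m. {v. (A ^^ m) v \<in> B})"
  have subW: "subspace (W m)" for m
  proof -
    have l: "linear (A ^^ m)" by (rule linear_funpow[OF lin])
    show ?thesis unfolding subspace_def W_def
      using sB l by (auto simp: subspace_def linear_add linear_0 linear_cmul)
  qed
  have mono1: "W m \<subseteq> W (Suc m)" for m unfolding W_def using AB by auto
  have monoW: "m1 \<le> m2 \<Longrightarrow> W m1 \<subseteq> W m2" for m1 m2
    by (rule lift_Suc_mono_le[of W]) (use mono1 in auto)
  have stab: "W (Suc m) = W (Suc (Suc m))" if "W m = W (Suc m)" for m
  proof
    show "W (Suc m) \<subseteq> W (Suc (Suc m))" by (rule mono1)
    show "W (Suc (Suc m)) \<subseteq> W (Suc m)"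
    proof
      fix v assume "v \<in> W (Suc (Suc m))"
      then have "A v \<in> W (Suc m)" unfolding W_def by (simp add: funpow_Suc_right del: funpow.simps)
      then have "A v \<in> W m" using that by simp
      then show "v \<in> W (Suc m)" unfolding W_def by (simp add: funpow_Suc_right del: funpow.simps)
    qed
  qed
  have stab_all: "W m = W (m + t)" if "W m = W (Suc m)" for m t
  proof (induction t)
    case 0 then show ?case by simp
  next
    case (Suc t)
    have "W (m + t) = W (Suc (m + t))"
    proof (induction t)
      case 0 then show ?case using that by simp
    next
      case (Suc t) then show ?case using stab by simp
    qed
    then show ?case using Suc by simp
  qed
  have W0: "W 0 = B" unfolding W_def by simp
  define Ax where "Ax = (\<lambda>p. axis p (1::real)) ` (- S)"
  have AxB: "Ax \<subseteq> W 0" unfolding W0 Ax_def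
  proof
    fix x assume "x \<in> (\<lambda>p. axis p (1::real)) ` (- S)"
    then obtain p where p: "p \<notin> S" "x = axis p 1" by auto
    have "\<forall>q\<in>S. x $ q = 0" using p by (auto simp: axis_def)
    then show "x \<in> B" by (rule UB)
  qed
  have indAx: "independent Ax"
    by (rule independent_mono[OF independent_Basis]) (auto simp: Ax_def)
  have cardAx: "card Ax = CARD('n) - card S"
  proof -
    have "inj_on (\<lambda>p. axis p (1::real)) (- S)" by (auto simp: inj_on_def axis_eq_axis)
    then have "card Ax = card (- S)" unfolding Ax_def by (rule card_image)
    also have "\<dots> = CARD('n) - card S"
    proof -
      have "card (UNIV - S) = card (UNIV::'n set) - card S" by (rule card_Diff_subset) simp_all
      then show ?thesis by (simp add: Compl_eq_Diff_UNIV)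
    qed
    finally show ?thesis .
  qed
  have dim0: "CARD('n) - card S \<le> dim (W 0)"
    using independent_card_le_dim[OF AxB indAx] cardAx by simp
  have dimle: "dim (W m) \<le> CARD('n)" for m
    using dim_subset_UNIV[of "W m"] by simp
  have cS: "card S \<le> CARD('n)" by (rule card_mono) auto
  have key: "W (card S) = W (card S + t)" for t
  proof (cases "\<exists>m\<le>card S. W m = W (Suc m)")
    case True
    then obtain m0 where m0: "m0 \<le> card S" "W m0 = W (Suc m0)" by blast
    have "W (card S) = W (m0 + (card S - m0))" using m0 by simp
    also have "\<dots> = W m0" using stab_all[OF m0(2)] by simp
    also have "\<dots> = W (m0 + (card S - m0 + t))" using stab_all[OF m0(2)] by simp
    also have "\<dots> = W (card S + t)" using m0 by (simp add: algebra_simps)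
    finally show ?thesis .
  next
    case False
    have inc: "dim (W m1) < dim (W (Suc m1))" if "m1 \<le> card S" for m1
    proof (rule ccontr)
      assume "\<not> dim (W m1) < dim (W (Suc m1))"
      then have "W m1 = W (Suc m1)"
        using subspace_dim_equal[OF subW subW mono1] by simp
      then show False using False that by blast
    qed
    have grow: "dim (W 0) + m1 \<le> dim (W m1)" if "m1 \<le> Suc (card S)" for m1
      using that
    proof (induction m1)
      case 0 then show ?case by simp
    next
      case (Suc m1)
      then have "dim (W 0) + m1 \<le> dim (W m1)" by simp
      moreover have "dim (W m1) < dim (W (Suc m1))" using inc Suc.prems by simp
      ultimately show ?case by simp
    qed
    have "dim (W 0) + Suc (card S) \<le> dim (W (Suc (card S)))" by (rule grow) simp
    then have "CARD('n) + 1 \<le> CARD('n)" using dim0 dimle[of "Suc (card S)"] cS by linarith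
    then show ?thesis by simp
  qed
  have vS: "v \<in> W (card S)"
  proof (cases "M \<le> card S")
    case True
    then show ?thesis using monoW[OF True] M unfolding W_def by auto
  next
    case False
    have "W M = W (card S)" using key[of "M - card S"] False by simp
    then show ?thesis using M unfolding W_def by auto
  qed
  have "v \<in> W m" using monoW[OF m] vS by auto
  then show ?thesis unfolding W_def by simp
qed


lemma pairs_L2:
  fixes \<sigma> :: "'a::finite \<Rightarrow> 'a list"
  assumes ne: "\<forall>a. \<sigma> a \<noteq> []" and ab: "(a, b) \<in> L2 \<sigma>" and i: "i < length (\<sigma> a)"
  shows "((\<sigma> a @ [hd (\<sigma> b)]) ! i, (\<sigma> a @ [hd (\<sigma> b)]) ! Suc i) \<in> L2 \<sigma>"
proof -
  obtain y where y: "y \<in> cyl2 \<sigma> a b" using L2E[OF ab] by blast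
  have yX: "y \<in> Xsub \<sigma>" "y 0 = a" "y 1 = b" using y unfolding cyl2_def by auto
  define u where "u = bisubst \<sigma> y"
  define w where "w = \<sigma> a @ [hd (\<sigma> b)]"
  have uX: "u \<in> Xsub \<sigma>" unfolding u_def using bs_X[OF ne yX(1), where n=1] by simp
  have uw: "u (int i) = w ! i" if "i \<le> length (\<sigma> a)" for i
  proof (cases "i < length (\<sigma> a)")
    case True then show ?thesis
      using bs_at0[OF ne, where n=1 and y=y and j=i] yX unfolding u_def w_def by (simp add: nth_append)
  next
    case False then have "i = length (\<sigma> a)" using that by simp
    then show ?thesis using bs_at1[OF ne, where n=1 and y=y] yX unfolding u_def w_def by simp
  qed
  have "((\<lambda>t. u (t + int i)) 0, (\<lambda>t. u (t + int i)) 1) \<in> L2 \<sigma>"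
    by (rule L2I) (rule Xsub_trans[OF uX])
  moreover have "(\<lambda>t. u (t + int i)) 0 = w ! i" using uw[of i] i by simp
  moreover have "(\<lambda>t. u (t + int i)) 1 = w ! Suc i" using uw[of "Suc i"] i by (simp add: add.commute)
  ultimately show ?thesis unfolding w_def by simp
qed

theorem proposition4p6:
  fixes \<sigma> :: "'a::finite \<Rightarrow> 'a list"
    and f :: "(int \<Rightarrow> 'a) \<Rightarrow> int"
    and k :: nat
  assumes prim: "primitive \<sigma>"
    and cont: "continuous_map (Xtop \<sigma>) euclidean f"
    and const: "\<forall>(a, b)\<in>L2 \<sigma>. \<forall>j<length (substpow \<sigma> k a).
                  \<exists>c. \<forall>x\<in>atom \<sigma> k a b j. f x = c"
    and cob: "coboundary \<sigma> (\<lambda>x. real_of_int (f x))"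
  shows "\<forall>n\<ge>k + card (L2 \<sigma>). in_beta_image \<sigma> (phi \<sigma> f n)"
proof -
  have ne: "\<forall>a. \<sigma> a \<noteq> []" using prim unfolding primitive_def nonerasing_def by blast
  obtain g where gc: "continuous_map (Xtop \<sigma>) euclidean g"
    and gcob: "\<forall>x\<in>Xsub \<sigma>. real_of_int (f x) = g (shift x) - g x"
    using cob unfolding coboundary_def by blast
  have exN: "\<exists>N\<ge>k. in_beta_image \<sigma> (phi \<sigma> f N)"
  proof (cases "CARD('a) \<ge> 2")
    case False
    have allEq: "\<forall>u v :: 'a. u = v"
    proof -
      have "card (UNIV :: 'a set) \<le> Suc 0" using False by simp
      then show ?thesis using card_le_Suc0_iff_eq[of "UNIV :: 'a set"] by simp
    qed
    have "in_beta_image \<sigma> (phi \<sigma> f k)"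
      unfolding in_beta_image_def
    proof (intro exI[of _ "\<lambda>_. 0"] ballI, clarify)
      fix a b assume ab: "(a, b) \<in> L2 \<sigma>"
      obtain y where y: "y \<in> cyl2 \<sigma> a b" using L2E[OF ab] by blast
      have "bisubst (substpow \<sigma> k) (shift y) = bisubst (substpow \<sigma> k) y" using allEq by (intro ext) blast
      then show "phi \<sigma> f k (a, b) = 0 - 0" using phi_g[OF ne const gcob order_refl y] by simp
    qed
    then show ?thesis by blast
  next
    case True
    define \<delta> where "\<delta> = 1 / (2 * (real CARD('a) + 1)) / 2"
    have \<delta>0: "0 < \<delta>" unfolding \<delta>_def by simp
    obtain R where R: "\<forall>x\<in>Xsub \<sigma>. \<forall>x'\<in>Xsub \<sigma>. (\<forall>t. \<bar>t\<bar> \<le> int R \<longrightarrow> x t = x' t) \<longrightarrow> \<bar>g x - g x'\<bar> < \<delta>"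
      using unif_cont[OF gc \<delta>0] by blast
    define Mk where "Mk = Max (range (\<lambda>c. length (substpow \<sigma> k c)))"
    obtain N0 where N0: "\<forall>N\<ge>N0. \<forall>c. 2 * R + 2 + 2 * Mk \<le> length (substpow \<sigma> N c)"
      using growth[OF prim True] by blast
    define N where "N = max N0 k"
    have kN: "k \<le> N" unfolding N_def by simp
    define L where "L = (\<lambda>c. length (substpow \<sigma> N c))"
    have LN: "2 * R + 2 + 2 * Mk \<le> L c" for c using N0 unfolding N_def L_def by simp
    define m where "m = (\<lambda>c. L c div 2)"
    have mL: "2 * m c \<le> L c \<and> L c \<le> 2 * m c + 1" for c
    proof -
      have "L c div 2 * 2 + L c mod 2 = L c" by (rule div_mult_mod_eq)
      moreover have "L c mod 2 < 2" by simp
      ultimately show ?thesis unfolding m_def by linarith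
    qed
    define wc where "wc = (\<lambda>c. SOME w. w \<in> Xsub \<sigma> \<and> w 0 = c)"
    have wcP: "wc c \<in> Xsub \<sigma> \<and> wc c 0 = c" if "w \<in> Xsub \<sigma>" "w 0 = c" for w c
      unfolding wc_def by (rule someI[where P="\<lambda>w. w \<in> Xsub \<sigma> \<and> w 0 = c" and x=w]) (use that in simp)
    define H where "H = (\<lambda>c. \<Sum>j<m c. f ((shift ^^ j) (bisubst (substpow \<sigma> N) (wc c))))"
    define D where "D = (\<lambda>c. g ((shift ^^ m c) (bisubst (substpow \<sigma> N) (wc c))) - real_of_int (H c))"
    have approxD: "\<bar>g (bisubst (substpow \<sigma> N) w) - D (w 0)\<bar> < \<delta>" if w: "w \<in> Xsub \<sigma>" for w
    proof -
      have wc: "wc (w 0) \<in> Xsub \<sigma>" "wc (w 0) 0 = w 0" using wcP[OF w refl] by auto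
      have bw: "bisubst (substpow \<sigma> N) w \<in> Xsub \<sigma>" by (rule bs_X[OF ne w])
      have bwc: "bisubst (substpow \<sigma> N) (wc (w 0)) \<in> Xsub \<sigma>" by (rule bs_X[OF ne wc(1)])
      have sums: "(\<Sum>j<m (w 0). f ((shift ^^ j) (bisubst (substpow \<sigma> N) w))) = H (w 0)"
        unfolding H_def
      proof (rule sum.cong)
        fix j assume "j \<in> {..<m (w 0)}"
        then have j: "j < m (w 0)" by simp
        have jL: "j < length (substpow \<sigma> N (w 0))" using j mL[of "w 0"] unfolding L_def by linarith
        have alt: "j + Mk < length (substpow \<sigma> N (w 0))" using j mL[of "w 0"] LN[of "w 0"] unfolding L_def by linarith
        show "f ((shift ^^ j) (bisubst (substpow \<sigma> N) w)) = f ((shift ^^ j) (bisubst (substpow \<sigma> N) (wc (w 0))))"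
          by (rule Fsame[OF ne const kN w wc(1)]) (use wc jL alt in \<open>auto simp: Mk_def\<close>)
      qed simp
      have tel: "real_of_int (\<Sum>j<m (w 0). f ((shift ^^ j) (bisubst (substpow \<sigma> N) w))) =
          g ((shift ^^ m (w 0)) (bisubst (substpow \<sigma> N) w)) - g (bisubst (substpow \<sigma> N) w)"
        by (rule telescope[OF gcob bw])
      have close: "\<bar>g ((shift ^^ m (w 0)) (bisubst (substpow \<sigma> N) w)) - g ((shift ^^ m (w 0)) (bisubst (substpow \<sigma> N) (wc (w 0))))\<bar> < \<delta>"
      proof -
        have X1: "(shift ^^ m (w 0)) (bisubst (substpow \<sigma> N) w) \<in> Xsub \<sigma>" by (rule shift_pow_X[OF bw])
        have X2: "(shift ^^ m (w 0)) (bisubst (substpow \<sigma> N) (wc (w 0))) \<in> Xsub \<sigma>" by (rule shift_pow_X[OF bwc])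
        have ag: "\<forall>t. \<bar>t\<bar> \<le> int R \<longrightarrow> (shift ^^ m (w 0)) (bisubst (substpow \<sigma> N) w) t = (shift ^^ m (w 0)) (bisubst (substpow \<sigma> N) (wc (w 0))) t"
        proof (intro allI impI)
          fix t :: int assume t: "\<bar>t\<bar> \<le> int R"
          have m1: "int R + 1 \<le> int (m (w 0))" using mL[of "w 0"] LN[of "w 0"] by linarith
          have m2: "int R + int (m (w 0)) < int (L (w 0))" using mL[of "w 0"] LN[of "w 0"] by linarith
          define s where "s = nat (t + int (m (w 0)))"
          have s1: "int s = t + int (m (w 0))" unfolding s_def using t m1 by simp
          have sL: "s < length (substpow \<sigma> N (w 0))" using s1 t m2 unfolding L_def by linarith
          have "(shift ^^ m (w 0)) (bisubst (substpow \<sigma> N) w) t = bisubst (substpow \<sigma> N) w (int s)"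
            by (simp add: shift_pow s1)
          also have "\<dots> = substpow \<sigma> N (w 0) ! s" by (rule bs_at0[OF ne, where j=s and n=N and y=w, OF sL])
          also have "\<dots> = bisubst (substpow \<sigma> N) (wc (w 0)) (int s)"
            using bs_at0[OF ne, where j=s and n=N and y="wc (w 0)"] sL wc by simp
          also have "\<dots> = (shift ^^ m (w 0)) (bisubst (substpow \<sigma> N) (wc (w 0))) t"
            by (simp add: shift_pow s1)
          finally show "(shift ^^ m (w 0)) (bisubst (substpow \<sigma> N) w) t = (shift ^^ m (w 0)) (bisubst (substpow \<sigma> N) (wc (w 0))) t" .
        qed
        show ?thesis using R X1 X2 ag by blast
      qed
      have "g (bisubst (substpow \<sigma> N) w) = g ((shift ^^ m (w 0)) (bisubst (substpow \<sigma> N) w)) - real_of_int (H (w 0))"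
        using tel sums by simp
      then show ?thesis using close unfolding D_def by simp
    qed
    define Phi where "Phi = (\<lambda>ab. \<Sum>j<length (substpow \<sigma> N (fst ab)). constval f (atom \<sigma> N (fst ab) (snd ab) j))"
    have approx: "\<forall>(a, b)\<in>L2 \<sigma>. \<bar>real_of_int (Phi (a, b)) - (D b - D a)\<bar> < 1 / (2 * (real CARD('a) + 1))"
    proof (intro ballI, clarify)
      fix a b assume ab: "(a, b) \<in> L2 \<sigma>"
      obtain y where y: "y \<in> cyl2 \<sigma> a b" using L2E[OF ab] by blast
      have yX: "y \<in> Xsub \<sigma>" "y 0 = a" "y 1 = b" using y unfolding cyl2_def by auto
      have sy: "shift y \<in> Xsub \<sigma>" "shift y 0 = b" using shift_X[OF yX(1)] yX by (auto simp: shift_def)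
      have "real_of_int (Phi (a, b)) = phi \<sigma> f N (a, b)" unfolding Phi_def phi_def by simp
      also have "\<dots> = g (bisubst (substpow \<sigma> N) (shift y)) - g (bisubst (substpow \<sigma> N) y)"
        by (rule phi_g[OF ne const gcob kN y])
      finally have e: "real_of_int (Phi (a, b)) - (D b - D a) =
          (g (bisubst (substpow \<sigma> N) (shift y)) - D b) - (g (bisubst (substpow \<sigma> N) y) - D a)" by simp
      have e1: "\<bar>g (bisubst (substpow \<sigma> N) (shift y)) - D b\<bar> < \<delta>" using approxD[OF sy(1)] sy(2) by simp
      have e2: "\<bar>g (bisubst (substpow \<sigma> N) y) - D a\<bar> < \<delta>" using approxD[OF yX(1)] yX(2) by simp
      have "\<bar>real_of_int (Phi (a, b)) - (D b - D a)\<bar> \<le>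
          \<bar>g (bisubst (substpow \<sigma> N) (shift y)) - D b\<bar> + \<bar>g (bisubst (substpow \<sigma> N) y) - D a\<bar>"
        unfolding e by (rule abs_triangle_ineq4)
      also have "\<dots> < \<delta> + \<delta>" using e1 e2 by simp
      also have "\<delta> + \<delta> = 1 / (2 * (real CARD('a) + 1))" by (simp only: \<delta>_def field_sum_of_halves)
      finally show "\<bar>real_of_int (Phi (a, b)) - (D b - D a)\<bar> < 1 / (2 * (real CARD('a) + 1))" .
    qed
    obtain h where h: "\<forall>(a, b)\<in>L2 \<sigma>. real_of_int (Phi (a, b)) = h b - h a"
      using round_exists[OF approx] by blast
    have "in_beta_image \<sigma> (phi \<sigma> f N)"
      unfolding in_beta_image_def
    proof (intro exI[of _ h] ballI, clarify)
      fix a b assume "(a, b) \<in> L2 \<sigma>"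
      then have "real_of_int (Phi (a, b)) = h b - h a" using h by blast
      then show "phi \<sigma> f N (a, b) = h b - h a" unfolding Phi_def phi_def by simp
    qed
    then show ?thesis using kN by blast
  qed
  then obtain N where kN: "k \<le> N" and bN: "in_beta_image \<sigma> (phi \<sigma> f N)" by blast
  define ww where "ww = (\<lambda>p::'a \<times> 'a. \<sigma> (fst p) @ [hd (\<sigma> (snd p))])"
  define A where "A = (\<lambda>v::real^('a \<times> 'a). \<chi> p. \<Sum>i<length (\<sigma> (fst p)). v $ (ww p ! i, ww p ! Suc i))"
  define B where "B = {v::real^('a \<times> 'a). \<exists>h. \<forall>(a, b)\<in>L2 \<sigma>. v $ (a, b) = h b - h a}"
  define \<Phi> where "\<Phi> = (\<chi> p. phi \<sigma> f k p)"
  have Aeq: "A v $ (a, b) = (\<Sum>i<length (\<sigma> a). v $ (ww (a, b) ! i, ww (a, b) ! Suc i))" for v a b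
    unfolding A_def by simp
  have lin: "linear A"
    unfolding A_def by (intro linearI) (simp_all add: vec_eq_iff sum.distrib sum_distrib_left)
  have sB: "subspace B"
    unfolding subspace_def
  proof (intro conjI ballI allI)
    show "0 \<in> B" unfolding B_def by (intro CollectI exI[of _ "\<lambda>_. 0"]) auto
  next
    fix x y assume "x \<in> B" "y \<in> B"
    then obtain h1 h2 where h1: "\<forall>(a, b)\<in>L2 \<sigma>. x $ (a, b) = h1 b - h1 a"
      and h2: "\<forall>(a, b)\<in>L2 \<sigma>. y $ (a, b) = h2 b - h2 a"
      unfolding B_def by blast
    have "\<forall>(a, b)\<in>L2 \<sigma>. (x + y) $ (a, b) = (h1 b + h2 b) - (h1 a + h2 a)"
    proof (intro ballI, clarify)
      fix a b assume ab: "(a, b) \<in> L2 \<sigma>"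
      have "x $ (a, b) = h1 b - h1 a" using bspec[OF h1 ab] by simp
      moreover have "y $ (a, b) = h2 b - h2 a" using bspec[OF h2 ab] by simp
      ultimately show "(x + y) $ (a, b) = (h1 b + h2 b) - (h1 a + h2 a)" by simp
    qed
    note hh = this
    show "x + y \<in> B" unfolding B_def mem_Collect_eq
      by (rule exI[of _ "\<lambda>c. h1 c + h2 c"]) (use hh in simp)
  next
    fix c :: real and x assume "x \<in> B"
    then obtain h1 where h1: "\<forall>(a, b)\<in>L2 \<sigma>. x $ (a, b) = h1 b - h1 a" unfolding B_def by blast
    have "\<forall>(a, b)\<in>L2 \<sigma>. (c *\<^sub>R x) $ (a, b) = c * h1 b - c * h1 a"
    proof (intro ballI, clarify)
      fix a b assume ab: "(a, b) \<in> L2 \<sigma>"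
      have "x $ (a, b) = h1 b - h1 a" using bspec[OF h1 ab] by simp
      then show "(c *\<^sub>R x) $ (a, b) = c * h1 b - c * h1 a" by (simp add: right_diff_distrib)
    qed
    note hh = this
    show "c *\<^sub>R x \<in> B" unfolding B_def mem_Collect_eq
      by (rule exI[of _ "\<lambda>d. c * h1 d"]) (use hh in simp)
  qed
  have pairs: "(ww (a, b) ! i, ww (a, b) ! Suc i) \<in> L2 \<sigma>" if "(a, b) \<in> L2 \<sigma>" "i < length (\<sigma> a)" for a b i
    unfolding ww_def using pairs_L2[OF ne that] by simp
  have AB: "A v \<in> B" if vB: "v \<in> B" for v
  proof -
    obtain h where h: "\<forall>(a, b)\<in>L2 \<sigma>. v $ (a, b) = h b - h a" using vB unfolding B_def by blast
    have "\<forall>(a, b)\<in>L2 \<sigma>. A v $ (a, b) = h (hd (\<sigma> b)) - h (hd (\<sigma> a))"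
    proof (intro ballI, clarify)
      fix a b assume ab: "(a, b) \<in> L2 \<sigma>"
      have t: "v $ (ww (a, b) ! i, ww (a, b) ! Suc i) = h (ww (a, b) ! Suc i) - h (ww (a, b) ! i)"
        if "i < length (\<sigma> a)" for i
        using bspec[OF h pairs[OF ab that]] by simp
      have "A v $ (a, b) = (\<Sum>i<length (\<sigma> a). h (ww (a, b) ! Suc i) - h (ww (a, b) ! i))"
        unfolding Aeq by (rule sum.cong) (auto simp: t)
      also have "\<dots> = h (ww (a, b) ! length (\<sigma> a)) - h (ww (a, b) ! 0)" by (rule sum_lessThan_telescope)
      also have "\<dots> = h (hd (\<sigma> b)) - h (hd (\<sigma> a))" using ne by (simp add: ww_def nth_append hd_conv_nth)
      finally show "A v $ (a, b) = h (hd (\<sigma> b)) - h (hd (\<sigma> a))" .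
    qed
    note hh = this
    show ?thesis unfolding B_def mem_Collect_eq
      by (rule exI[of _ "\<lambda>c. h (hd (\<sigma> c))"]) (use hh in simp)
  qed
  have UB: "v \<in> B" if "\<forall>p\<in>L2 \<sigma>. v $ p = 0" for v
    unfolding B_def using that by (intro CollectI exI[of _ "\<lambda>_. 0"]) auto
  have iter: "\<forall>p\<in>L2 \<sigma>. (A ^^ j) \<Phi> $ p = phi \<sigma> f (k + j) p" for j
  proof (induction j)
    case 0 then show ?case unfolding \<Phi>_def by simp
  next
    case (Suc j)
    show ?case
    proof (intro ballI, clarify)
      fix a b assume ab: "(a, b) \<in> L2 \<sigma>"
      have t: "(A ^^ j) \<Phi> $ (ww (a, b) ! i, ww (a, b) ! Suc i) = phi \<sigma> f (k + j) (ww (a, b) ! i, ww (a, b) ! Suc i)"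
        if "i < length (\<sigma> a)" for i
        using Suc.IH pairs[OF ab that] by blast
      have kj: "k \<le> k + j" by simp
      have "(A ^^ Suc j) \<Phi> $ (a, b) = (\<Sum>i<length (\<sigma> a). (A ^^ j) \<Phi> $ (ww (a, b) ! i, ww (a, b) ! Suc i))"
        by (simp add: Aeq)
      also have "\<dots> = (\<Sum>i<length (\<sigma> a). phi \<sigma> f (k + j) (ww (a, b) ! i, ww (a, b) ! Suc i))"
        by (rule sum.cong) (auto simp: t)
      also have "\<dots> = phi \<sigma> f (Suc (k + j)) (a, b)"
        using phi_rec[OF ne const gcob kj ab] unfolding ww_def by simp
      finally show "(A ^^ Suc j) \<Phi> $ (a, b) = phi \<sigma> f (k + Suc j) (a, b)" by simp
    qed
  qed
  have toB: "(A ^^ j) \<Phi> \<in> B \<longleftrightarrow> in_beta_image \<sigma> (phi \<sigma> f (k + j))" for j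
  proof
    assume "(A ^^ j) \<Phi> \<in> B"
    then obtain h where h: "\<forall>(a, b)\<in>L2 \<sigma>. (A ^^ j) \<Phi> $ (a, b) = h b - h a" unfolding B_def by blast
    have "\<forall>(a, b)\<in>L2 \<sigma>. phi \<sigma> f (k + j) (a, b) = h b - h a" using h iter[of j] by auto
    then show "in_beta_image \<sigma> (phi \<sigma> f (k + j))" unfolding in_beta_image_def by blast
  next
    assume "in_beta_image \<sigma> (phi \<sigma> f (k + j))"
    then obtain h where h: "\<forall>(a, b)\<in>L2 \<sigma>. phi \<sigma> f (k + j) (a, b) = h b - h a" unfolding in_beta_image_def by blast
    have "\<forall>(a, b)\<in>L2 \<sigma>. (A ^^ j) \<Phi> $ (a, b) = h b - h a" using h iter[of j] by auto
    then show "(A ^^ j) \<Phi> \<in> B" unfolding B_def by blast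
  qed
  have MB: "(A ^^ (N - k)) \<Phi> \<in> B" using toB[of "N - k"] bN kN by simp
  show ?thesis
  proof (intro allI impI)
    fix n assume n: "k + card (L2 \<sigma>) \<le> n"
    have cn: "card (L2 \<sigma>) \<le> n - k" using n by linarith
    have "(A ^^ (n - k)) \<Phi> \<in> B"
      by (rule chain_stab[OF lin sB AB UB MB cn])
    then show "in_beta_image \<sigma> (phi \<sigma> f n)" using toB[of "n - k"] n by simp
  qed
qed


end
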